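(* Let $k \geq 3$, let $F$ be a $k$-edge graph with $\gamma(F)=1$, and let $G$ be a connected graph with exactly $2k+3$ edges that contains two vertex-disjoint copies $F_1$ and $F_2$ of $F$. Then either $\iota(G,F) = 1$ or $G$ is a $(2k+3,F)$-special graph.
   Context: All graphs are finite and simple. For $D \subseteq V(G)$, $N_G[D]$ is the closed neighbourhood of $D$. A set $D \subseteq V(G)$ is an $F$-isolating set of $G$ if $G - N_G[D]$ contains no subgraph isomorphic to $F$; $\iota(G,F)$ is the minimum size of such a set. $\gamma(F)=1$ means $F$ has a vertex adjacent to all other vertices of $F$. ($m,F$)-special graphs: let $F$ be a connected $k$-edge graph. Write $m+1 = q(k+2)+r$ with integers $q \ge 0$, $0 \le r \le k+1$. If $q = 0$, an $(m,F)$-special graph is any connected $m$-edge graph. If $q \geq 1$, take distinct vertices $v_1,\dots,v_q$, copies $F_1,\dots,F_q$ of $F$ such that $V(F_1),\dots,V(F_q),\{v_1,\dots,v_q\}$ are pairwise disjoint, vertices $w_i \in V(F_i)$, and let $G_i$ be the graph with vertex set $\{v_i\}\cup V(F_i)$ and edge set $E(F_i)\cup\{v_iw_i\}$. Let $T$ be a tree with vertex set $\{v_1,\dots,v_q\}$ and $T'$ a connected $r$-edge graph with $V(T') \cap \bigcup_i V(G_i) = \{v_q\}$. The graph with vertex set $V(T')\cup\bigcup_i V(G_i)$ and edge set $E(T)\cup E(T')\cup \bigcup_i E(G_i)$ is an $(m,F)$-special graph. (For $m = 2k+3$ one has $q=2$, $r=0$: such a graph is two disjoint copies of $F$, each joined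 by one edge to one of two adjacent new vertices $v_1,v_2$.) *)

theory Defs
  imports Main
begin

definition sgraph :: "'a set \<Rightarrow> 'a set set \<Rightarrow> bool" where
  "sgraph V E \<longleftrightarrow> finite V \<and> (\<forall>e\<in>E. \<exists>u v. u \<noteq> v \<and> e = {u, v} \<and> u \<in> V \<and> v \<in> V)"

definition adj_rel :: "'a set set \<Rightarrow> ('a \<times> 'a) set" where
  "adj_rel E = {(u, v). {u, v} \<in> E}"

definition connected_graph :: "'a set \<Rightarrow> 'a set set \<Rightarrow> bool" where
  "connected_graph V E \<longleftrightarrow> sgraph V E \<and> V \<noteq> {} \<and>
     (\<forall>u\<in>V. \<forall>v\<in>V. (u, v) \<in> (adj_rel E)\<^sup>*)"

definition tree_graph :: "'a set \<Rightarrow> 'a set set \<Rightarrow> bool" where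
  "tree_graph V E \<longleftrightarrow> connected_graph V E \<and> card E + 1 = card V"

definition embeds :: "('b \<Rightarrow> 'a) \<Rightarrow> 'b set \<Rightarrow> 'b set set \<Rightarrow> 'a set \<Rightarrow> 'a set set \<Rightarrow> bool" where
  "embeds f VF EF V E \<longleftrightarrow> inj_on f VF \<and> f ` VF \<subseteq> V \<and> (\<forall>e\<in>EF. f ` e \<in> E)"

definition has_copy :: "'b set \<Rightarrow> 'b set set \<Rightarrow> 'a set \<Rightarrow> 'a set set \<Rightarrow> bool" where
  "has_copy VF EF V E \<longleftrightarrow> (\<exists>f. embeds f VF EF V E)"

definition closed_nbhd :: "'a set \<Rightarrow> 'a set set \<Rightarrow> 'a set \<Rightarrow> 'a set" where
  "closed_nbhd V E D = D \<union> {v \<in> V. \<exists>u\<in>D. {u, v} \<in> E}"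

definition isolating :: "'a set \<Rightarrow> 'a set set \<Rightarrow> 'b set \<Rightarrow> 'b set set \<Rightarrow> 'a set \<Rightarrow> bool" where
  "isolating V E VF EF D \<longleftrightarrow> D \<subseteq> V \<and>
     (let W = V - closed_nbhd V E D in \<not> has_copy VF EF W {e \<in> E. e \<subseteq> W})"

definition iota :: "'a set \<Rightarrow> 'a set set \<Rightarrow> 'b set \<Rightarrow> 'b set set \<Rightarrow> nat" where
  "iota V E VF EF = (LEAST n. \<exists>D. isolating V E VF EF D \<and> card D = n)"

definition gamma_one :: "'b set \<Rightarrow> 'b set set \<Rightarrow> bool" where
  "gamma_one VF EF \<longleftrightarrow> (\<exists>c\<in>VF. \<forall>u\<in>VF. u \<noteq> c \<longrightarrow> {c, u} \<in> EF)"

definition iso_copy :: "'b set \<Rightarrow> 'b set set \<Rightarrow> 'a set \<Rightarrow> 'a set set \<Rightarrow> bool" where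
  "iso_copy VF EF VC EC \<longleftrightarrow> (\<exists>g. bij_betw g VF VC \<and> EC = (\<lambda>e. g ` e) ` EF)"

text \<open>Being special is invariant
  under isomorphism, so we express that G itself is of the constructed form, with all
  vertices of the construction taken from the vertex type of G.\<close>

definition special :: "nat \<Rightarrow> 'b set \<Rightarrow> 'b set set \<Rightarrow> 'a set \<Rightarrow> 'a set set \<Rightarrow> bool" where
  "special m VF EF V E \<longleftrightarrow>
    (let k = card EF; q = (m + 1) div (k + 2); r = (m + 1) mod (k + 2) in
     (q = 0 \<and> connected_graph V E \<and> card E = m) \<or>
     (q \<ge> 1 \<and>
      (\<exists>(v :: nat \<Rightarrow> 'a) (FV :: nat \<Rightarrow> 'a set) (FE :: nat \<Rightarrow> 'a set set) (w :: nat \<Rightarrow> 'a)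
          (ET :: 'a set set) (VT' :: 'a set) (ET' :: 'a set set).
         inj_on v {1..q} \<and>
         (\<forall>i\<in>{1..q}. iso_copy VF EF (FV i) (FE i)) \<and>
         (\<forall>i\<in>{1..q}. \<forall>j\<in>{1..q}. i \<noteq> j \<longrightarrow> FV i \<inter> FV j = {}) \<and>
         (\<forall>i\<in>{1..q}. FV i \<inter> v ` {1..q} = {}) \<and>
         (\<forall>i\<in>{1..q}. w i \<in> FV i) \<and>
         tree_graph (v ` {1..q}) ET \<and>
         connected_graph VT' ET' \<and> card ET' = r \<and>
         VT' \<inter> (\<Union>i\<in>{1..q}. insert (v i) (FV i)) = {v q} \<and>
         V = VT' \<union> (\<Union>i\<in>{1..q}. insert (v i) (FV i)) \<and>
         E = ET \<union> ET' \<union> (\<Union>i\<in>{1..q}. insert {v i, w i} (FE i)))))"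

end

theory Submission
  imports Defs
begin

lemma rtr_cut:
  assumes "(u, y) \<in> (adj_rel E)\<^sup>*" "u \<in> S" "y \<notin> S"
  shows "\<exists>e\<in>E. e \<inter> S \<noteq> {} \<and> e - S \<noteq> {}"
  using assms
proof (induction rule: rtrancl_induct)
  case base then show ?case by simp
next
  case (step y z)
  show ?case
  proof (cases "y \<in> S")
    case True
    from step(2) have "{y, z} \<in> E" by (simp add: adj_rel_def)
    with True step(5) show ?thesis by (intro bexI[of _ "{y,z}"]) auto
  next
    case False
    then show ?thesis using step by blast
  qed
qed

locale ctx =
  fixes VF :: "'b set" and EF :: "'b set set" and V :: "'a set" and E :: "'a set set"
  assumes sgF: "sgraph VF EF" and k3: "3 \<le> card EF" and gam: "gamma_one VF EF"
    and conn: "connected_graph V E" and cE: "card E = 2 * card EF + 3"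
begin

abbreviation "n \<equiv> card VF"
abbreviation "k \<equiv> card EF"

definition isc :: "'a set \<Rightarrow> 'a set set \<Rightarrow> bool" where
  "isc U D \<longleftrightarrow> (\<exists>f. embeds f VF EF V E \<and> U = f ` VF \<and> D = (\<lambda>e. f ` e) ` EF)"

definition nb :: "'a \<Rightarrow> 'a set" where "nb x = closed_nbhd V E {x}"

definition allbad :: bool where
  "allbad \<longleftrightarrow> (\<forall>x\<in>V. \<exists>U D. isc U D \<and> U \<inter> nb x = {})"

definition outd :: "'a set \<Rightarrow> 'a set set \<Rightarrow> nat" where
  "outd U D = card {e\<in>E. e \<notin> D \<and> e \<inter> U \<noteq> {}}"

definition deg :: "'a set set \<Rightarrow> 'a \<Rightarrow> nat" where
  "deg D v = card {e\<in>D. v \<in> e}"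

lemma sgG: "sgraph V E" using conn unfolding connected_graph_def by (rule conjunct1)

lemma finV: "finite V" using sgG unfolding sgraph_def by (rule conjunct1)

lemma Eedge: "e \<in> E \<Longrightarrow> \<exists>a b. a \<noteq> b \<and> e = {a,b} \<and> a \<in> V \<and> b \<in> V"
  using sgG unfolding sgraph_def by blast

lemma connV: "\<forall>u\<in>V. \<forall>v\<in>V. (u, v) \<in> (adj_rel E)\<^sup>*"
  using conn unfolding connected_graph_def by blast

lemma EsubPow: "E \<subseteq> Pow V" using Eedge by blast

lemma finE: "finite E" using finite_subset[OF EsubPow] finV by simp

lemma cut: assumes "S \<subseteq> V" "u \<in> S" "y \<in> V" "y \<notin> S"
  shows "\<exists>e\<in>E. e \<inter> S \<noteq> {} \<and> e - S \<noteq> {}"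
proof -
  have "(u, y) \<in> (adj_rel E)\<^sup>*" using connV assms by blast
  then show ?thesis by (rule rtr_cut[OF _ assms(2) assms(4)])
qed

lemma nb_iff: "y \<in> nb x \<longleftrightarrow> y = x \<or> {x, y} \<in> E"
proof -
  have "{x,y} \<in> E \<Longrightarrow> y \<in> V" using EsubPow by blast
  then show ?thesis by (auto simp: nb_def closed_nbhd_def)
qed

lemma finVF: "finite VF" using sgF by (simp add: sgraph_def)

lemma n3: "3 \<le> n"
proof -
  have "EF \<subseteq> {B. B \<subseteq> VF \<and> card B = 2}"
    using sgF by (auto simp: sgraph_def)
  then have "card EF \<le> n choose 2"
  proof -
    have "finite {B. B \<subseteq> VF \<and> card B = 2}" using finVF by simp
    then have "card EF \<le> card {B. B \<subseteq> VF \<and> card B = 2}"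
      using card_mono \<open>EF \<subseteq> _\<close> by blast
    then show ?thesis using n_subsets[OF finVF, of 2] by simp
  qed
  with k3 have c3: "3 \<le> n choose 2" by simp
  show ?thesis
  proof (rule ccontr)
    assume "\<not> 3 \<le> n"
    then have "n = 0 \<or> n = 1 \<or> n = 2" by auto
    then have "n choose 2 \<le> 1" by (auto simp: choose_two)
    with c3 show False by simp
  qed
qed

lemma isc_f:
  assumes "isc U D"
  obtains f where "inj_on f VF" "f ` VF \<subseteq> V" "\<forall>e\<in>EF. f ` e \<in> E" "U = f ` VF" "D = (\<lambda>e. f ` e) ` EF"
proof -
  from assms obtain f where f: "embeds f VF EF V E" "U = f ` VF" "D = (\<lambda>e. f ` e) ` EF"
    unfolding isc_def by (elim exE conjE)
  from f(1) have "inj_on f VF" "f ` VF \<subseteq> V" "\<forall>e\<in>EF. f ` e \<in> E"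
    unfolding embeds_def by simp_all
  then show thesis using that f(2,3) by simp
qed

lemma isc_fin: "isc U D \<Longrightarrow> finite U"
  using finVF by (elim isc_f) simp

lemma isc_card: "isc U D \<Longrightarrow> card U = n"
  by (elim isc_f) (simp add: card_image)

lemma isc_DE: "isc U D \<Longrightarrow> D \<subseteq> E"
  by (elim isc_f) auto

lemma isc_UV: "isc U D \<Longrightarrow> U \<subseteq> V"
  by (elim isc_f) auto

lemma isc_finD: "isc U D \<Longrightarrow> finite D"
  using isc_DE finE by (rule finite_subset)

lemma EFedge: "e \<in> EF \<Longrightarrow> \<exists>a b. a \<noteq> b \<and> e = {a,b} \<and> a \<in> VF \<and> b \<in> VF"
  using sgF unfolding sgraph_def by (elim conjE) (erule bspec)

lemma EF_Pow: "EF \<subseteq> Pow VF"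
proof
  fix e assume "e \<in> EF"
  then obtain a b where "e = {a,b}" "a \<in> VF" "b \<in> VF" using EFedge by blast
  then show "e \<in> Pow VF" by simp
qed

lemma isc_cardD: "isc U D \<Longrightarrow> card D = k"
proof (elim isc_f)
  fix f assume inj: "inj_on f VF" and D: "D = (\<lambda>e. f ` e) ` EF"
  have "inj_on ((`) f) EF" using inj_on_image_Pow[OF inj] inj_on_subset EF_Pow by blast
  then show "card D = k" unfolding D by (rule card_image)
qed

lemma isc_edge:
  assumes "isc U D" "e \<in> D"
  shows "\<exists>a b. a \<noteq> b \<and> e = {a,b} \<and> a \<in> U \<and> b \<in> U"
proof (rule isc_f[OF assms(1)])
  fix f assume inj: "inj_on f VF" and U: "U = f ` VF" and D: "D = (\<lambda>e. f ` e) ` EF"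
  obtain e0 where e0: "e0 \<in> EF" "e = f ` e0" using D assms(2) by blast
  then obtain a b where ab: "a \<noteq> b" "e0 = {a,b}" "a \<in> VF" "b \<in> VF"
    using EFedge by blast
  then have "f a \<noteq> f b" using inj by (meson inj_on_contraD)
  moreover have "e = {f a, f b}" using ab e0 by simp
  moreover have "f a \<in> U" "f b \<in> U" using ab U by simp_all
  ultimately show ?thesis by blast
qed

lemma isc_center:
  assumes "isc U D"
  shows "\<exists>c\<in>U. \<forall>u\<in>U. u \<noteq> c \<longrightarrow> {c,u} \<in> D"
proof (rule isc_f[OF assms(1)])
  fix f assume U: "U = f ` VF" and D: "D = (\<lambda>e. f ` e) ` EF"
  obtain c where c1: "c \<in> VF" and c2: "\<forall>u\<in>VF. u \<noteq> c \<longrightarrow> {c,u} \<in> EF"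
    using gam unfolding gamma_one_def by blast
  have "f c \<in> U" using c1 U by simp
  moreover have "\<forall>u\<in>U. u \<noteq> f c \<longrightarrow> {f c,u} \<in> D"
  proof (intro ballI impI)
    fix u assume u: "u \<in> U" "u \<noteq> f c"
    then obtain u0 where u0: "u0 \<in> VF" "u = f u0" using U by blast
    then have "u0 \<noteq> c" using u by blast
    then have "{c,u0} \<in> EF" using c2 u0 by blast
    moreover have "f ` {c,u0} = {f c, u}" using u0 by simp
    ultimately show "{f c, u} \<in> D" unfolding D by (metis image_eqI)
  qed
  ultimately show ?thesis by blast
qed

end

context ctx
begin

lemma vert_edge: assumes "y \<in> V" "z \<in> V" "z \<noteq> y" shows "\<exists>e\<in>E. y \<in> e"
proof -
  obtain e where "e \<in> E" "e \<inter> {y} \<noteq> {}" using cut[of "{y}" y z] assms by auto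
  then show ?thesis by blast
qed

lemma nb_self: "x \<in> nb x" by (simp add: nb_iff)

lemma nb_edge: "{x,y} \<in> E \<Longrightarrow> y \<in> nb x" by (simp add: nb_iff)

lemma nb_edge': "{y,x} \<in> E \<Longrightarrow> y \<in> nb x" by (simp add: nb_iff insert_commute)

lemma center_nb:
  assumes "isc U D" "c \<in> U" "\<forall>u\<in>U. u \<noteq> c \<longrightarrow> {c,u} \<in> D" "p \<in> U"
  shows "c \<in> nb p" "p \<in> nb c"
proof -
  have DE: "D \<subseteq> E" using isc_DE assms(1) .
  show "c \<in> nb p"
  proof (cases "p = c")
    case False then have "{c,p} \<in> E" using assms DE by blast
    then show ?thesis by (rule nb_edge')
  qed (simp add: nb_self)
  show "p \<in> nb c"
  proof (cases "p = c")
    case False then have "{c,p} \<in> E" using assms DE by blast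
    then show ?thesis by (rule nb_edge)
  qed (simp add: nb_self)
qed

lemma center_U_nb:
  assumes "isc U D" "c \<in> U" "\<forall>u\<in>U. u \<noteq> c \<longrightarrow> {c,u} \<in> D"
  shows "U \<subseteq> nb c"
  using center_nb(2)[OF assms] by blast

lemma Dsplit:
  assumes "isc U D"
  shows "card {e\<in>D. e \<inter> M = {}} = k - card {e\<in>D. e \<inter> M \<noteq> {}}"
proof -
  have f: "finite D" using isc_finD assms .
  have "{e\<in>D. e \<inter> M = {}} = D - {e\<in>D. e \<inter> M \<noteq> {}}" by blast
  then have "card {e\<in>D. e \<inter> M = {}} = card D - card {e\<in>D. e \<inter> M \<noteq> {}}"
    using f by (simp add: card_Diff_subset)
  then show ?thesis using isc_cardD assms by simp
qed

lemma cnt_out: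
  assumes "isc U D" "c \<in> U" "\<forall>u\<in>U. u \<noteq> c \<longrightarrow> {c,u} \<in> D" "M \<subseteq> U" "c \<notin> M"
  shows "card M \<le> card {e\<in>D. e \<inter> M \<noteq> {}}"
proof -
  have "inj_on (\<lambda>m. {c,m}) M" using assms(5) by (auto simp: inj_on_def doubleton_eq_iff)
  moreover have "(\<lambda>m. {c,m}) ` M \<subseteq> {e\<in>D. e \<inter> M \<noteq> {}}" using assms by auto
  moreover have "finite {e\<in>D. e \<inter> M \<noteq> {}}" using isc_finD[OF assms(1)] by simp
  ultimately show ?thesis by (rule card_inj_on_le)
qed

lemma cnt_in:
  assumes "isc U D" "c \<in> U" "\<forall>u\<in>U. u \<noteq> c \<longrightarrow> {c,u} \<in> D" "M \<subseteq> U" "c \<in> M"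
  shows "n - 1 \<le> card {e\<in>D. e \<inter> M \<noteq> {}}"
proof -
  have "inj_on (\<lambda>m. {c,m}) (U - {c})" by (auto simp: inj_on_def doubleton_eq_iff)
  moreover have "(\<lambda>m. {c,m}) ` (U - {c}) \<subseteq> {e\<in>D. e \<inter> M \<noteq> {}}" using assms by auto
  moreover have "finite {e\<in>D. e \<inter> M \<noteq> {}}" using isc_finD[OF assms(1)] by simp
  ultimately have "card (U - {c}) \<le> card {e\<in>D. e \<inter> M \<noteq> {}}" by (rule card_inj_on_le)
  moreover have "card (U - {c}) = n - 1" using isc_card[OF assms(1)] isc_fin[OF assms(1)] assms(2) by simp
  ultimately show ?thesis by simp
qed

lemma cnt_any:
  assumes "isc U D" "M \<subseteq> U" "x \<in> M"
  shows "card {e\<in>D. e \<inter> M = {}} \<le> k - 1"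
proof -
  obtain c where c: "c \<in> U" "\<forall>u\<in>U. u \<noteq> c \<longrightarrow> {c,u} \<in> D" using isc_center assms(1) by blast
  have "1 \<le> card {e\<in>D. e \<inter> M \<noteq> {}}"
  proof (cases "c \<in> M")
    case True then show ?thesis using cnt_in[OF assms(1) c assms(2)] n3 by simp
  next
    case False then have "card M \<le> card {e\<in>D. e \<inter> M \<noteq> {}}" using cnt_out[OF assms(1) c assms(2)] by simp
    moreover have "1 \<le> card M" using assms(2,3) isc_fin[OF assms(1)]
      by (metis One_nat_def Suc_leI card_gt_0_iff empty_iff finite_subset)
    ultimately show ?thesis by simp
  qed
  then show ?thesis using Dsplit[OF assms(1)] by simp
qed

lemma cnt_two:
  assumes "isc U D" "M \<subseteq> U" "x \<in> M" "y \<in> M" "x \<noteq> y"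
  shows "card {e\<in>D. e \<inter> M = {}} \<le> k - 2"
proof -
  obtain c where c: "c \<in> U" "\<forall>u\<in>U. u \<noteq> c \<longrightarrow> {c,u} \<in> D" using isc_center assms(1) by blast
  have "2 \<le> card {e\<in>D. e \<inter> M \<noteq> {}}"
  proof (cases "c \<in> M")
    case True then show ?thesis using cnt_in[OF assms(1) c assms(2)] n3 by simp
  next
    case False then have "card M \<le> card {e\<in>D. e \<inter> M \<noteq> {}}" using cnt_out[OF assms(1) c assms(2)] by simp
    moreover have "card {x,y} \<le> card M" using assms isc_fin[OF assms(1)]
      by (meson card_mono empty_subsetI finite_subset insert_subset)
    ultimately show ?thesis using assms(5) by simp
  qed
  then show ?thesis using Dsplit[OF assms(1)] by simp
qed

lemma cnt_cen:
  assumes "isc U D" "c \<in> U" "\<forall>u\<in>U. u \<noteq> c \<longrightarrow> {c,u} \<in> D" "M \<subseteq> U" "c \<in> M"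
  shows "card {e\<in>D. e \<inter> M = {}} \<le> k - (n - 1)"
  using cnt_in[OF assms] Dsplit[OF assms(1)] by simp

lemma deg_split:
  assumes "isc U D"
  shows "card {e\<in>D. e \<inter> {v} = {}} = k - deg D v"
proof -
  have "{e\<in>D. e \<inter> {v} \<noteq> {}} = {e\<in>D. v \<in> e}" by blast
  then show ?thesis using Dsplit[OF assms, of "{v}"] by (simp add: deg_def)
qed

lemma deg_ge:
  assumes "isc U D" "\<forall>u\<in>S. {v,u} \<in> D" "v \<notin> S"
  shows "card S \<le> deg D v"
proof -
  have "inj_on (\<lambda>m. {v,m}) S" using assms(3) by (auto simp: inj_on_def doubleton_eq_iff)
  moreover have "(\<lambda>m. {v,m}) ` S \<subseteq> {e\<in>D. v \<in> e}" using assms by auto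
  moreover have "finite {e\<in>D. v \<in> e}" using isc_finD[OF assms(1)] by simp
  ultimately show ?thesis unfolding deg_def by (rule card_inj_on_le)
qed

lemma tri:
  assumes "isc U D" "n = 3" "v \<in> U"
  shows "2 \<le> deg D v"
proof -
  have cU: "card U = 3" using isc_card assms by simp
  obtain a b where ab: "U = {v,a,b}" "v \<noteq> a" "v \<noteq> b" "a \<noteq> b"
  proof -
    have "card (U - {v}) = 2" using cU assms(3) isc_fin[OF assms(1)] by simp
    then obtain a b where "U - {v} = {a,b}" "a \<noteq> b" by (meson card_2_iff)
    then show ?thesis using that assms(3) by (metis Diff_iff insert_Diff insertI1 insert_commute)
  qed
  have sub: "D \<subseteq> {{v,a},{v,b},{a,b}}"
  proof
    fix e assume "e \<in> D"
    then obtain x y where "x \<noteq> y" "e = {x,y}" "x \<in> U" "y \<in> U" using isc_edge assms(1) by blast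
    then show "e \<in> {{v,a},{v,b},{a,b}}" using ab by (auto simp: insert_commute)
  qed
  have "card D = k" using isc_cardD assms(1) .
  moreover have "card {{v,a},{v,b},{a,b}} \<le> 3" by (auto simp: card_insert_if)
  ultimately have "D = {{v,a},{v,b},{a,b}}"
    using k3 sub card_seteq[of "{{v,a},{v,b},{a,b}}" D] by simp
  then have "{{v,a},{v,b}} \<subseteq> {e\<in>D. v \<in> e}" by auto
  moreover have "card {{v,a},{v,b}} = 2" using ab by (auto simp: doubleton_eq_iff)
  moreover have "finite {e\<in>D. v \<in> e}" using isc_finD[OF assms(1)] by simp
  ultimately show ?thesis unfolding deg_def by (metis card_mono)
qed

lemma osp:
  assumes edges: "\<forall>e\<in>D. \<exists>a b. a \<noteq> b \<and> e = {a,b} \<and> a \<in> U \<and> b \<in> U"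
    and cen: "w \<in> U" "\<forall>u\<in>U. u \<noteq> w \<longrightarrow> {w,u} \<in> D"
    and cov: "U \<subseteq> P1 \<union> P2" and dis: "P1 \<inter> P2 = {}"
    and crs: "\<forall>e\<in>D. e \<inter> P1 \<noteq> {} \<longrightarrow> e \<inter> P2 \<noteq> {} \<longrightarrow> e \<in> X"
    and mat: "\<forall>e\<in>X. \<forall>e'\<in>X. e \<noteq> e' \<longrightarrow> e \<inter> e' = {}"
    and wP1: "w \<in> P1"
  shows "(U \<subseteq> P1 \<and> D \<subseteq> Pow P1) \<or>
         (\<exists>b\<in>P2. {w,b} \<in> X \<and> {w,b} \<in> D \<and> U \<subseteq> insert b P1 \<and> D \<subseteq> insert {w,b} (Pow P1))"
proof (cases "U \<inter> P2 = {}")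
  case True
  then have "U \<subseteq> P1" using cov by blast
  moreover have "D \<subseteq> Pow P1" using edges \<open>U \<subseteq> P1\<close> by fastforce
  ultimately show ?thesis by blast
next
  case False
  then obtain b where b: "b \<in> U" "b \<in> P2" by blast
  have wb: "w \<noteq> b" using b wP1 dis by blast
  have wbD: "{w,b} \<in> D" using cen(2) b(1) wb by fastforce
  have i1: "{w,b} \<inter> P1 \<noteq> {}" using wP1 by blast
  have i2: "{w,b} \<inter> P2 \<noteq> {}" using b by blast
  have wbX: "{w,b} \<in> X" using crs[rule_format, OF wbD i1 i2] .
  have U2: "U \<inter> P2 \<subseteq> {b}"
  proof
    fix u assume u: "u \<in> U \<inter> P2"
    then have "u \<noteq> w" using wP1 dis by blast
    then have wuD: "{w,u} \<in> D" using cen u by blast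
    have j1: "{w,u} \<inter> P1 \<noteq> {}" using wP1 by blast
    have j2: "{w,u} \<inter> P2 \<noteq> {}" using u by blast
    have "{w,u} \<in> X" using crs[rule_format, OF wuD j1 j2] .
    show "u \<in> {b}"
    proof (rule ccontr)
      assume "u \<notin> {b}"
      then have "{w,u} \<noteq> {w,b}" by (auto simp: doubleton_eq_iff)
      then have "{w,u} \<inter> {w,b} = {}" using mat[rule_format, OF \<open>{w,u} \<in> X\<close> wbX] by blast
      then show False by blast
    qed
  qed
  then have Ub: "U \<subseteq> insert b P1" using cov by blast
  have "D \<subseteq> insert {w,b} (Pow P1)"
  proof
    fix e assume e: "e \<in> D"
    then obtain x y where xy: "x \<noteq> y" "e = {x,y}" "x \<in> U" "y \<in> U" using edges by blast
    show "e \<in> insert {w,b} (Pow P1)"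
    proof (cases "b \<in> e")
      case False then show ?thesis using xy Ub by auto
    next
      case True
      then have "e \<inter> P2 \<noteq> {}" using b by blast
      moreover have "e \<inter> P1 \<noteq> {}" using xy Ub True by auto
      ultimately have "e \<in> X" using crs[rule_format, OF e] by simp
      have "e = {w,b}"
      proof (rule ccontr)
        assume "e \<noteq> {w,b}"
        then have "e \<inter> {w,b} = {}" using mat[rule_format, OF \<open>e \<in> X\<close> wbX] by blast
        then show False using True by blast
      qed
      then show ?thesis by simp
    qed
  qed
  then show ?thesis using b wbX wbD Ub by blast
qed

end

context ctx
begin

lemma isc_iso: "isc U D \<Longrightarrow> iso_copy VF EF U D"
proof -
  assume "isc U D"
  then obtain f where "inj_on f VF" "U = f ` VF" "D = (\<lambda>e. f ` e) ` EF" by (elim isc_f)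
  then show ?thesis unfolding iso_copy_def bij_betw_def by blast
qed

lemma conn2: assumes "a \<noteq> b" shows "connected_graph {a,b} {{a,b}}"
proof -
  have "sgraph {a,b} {{a,b}}" unfolding sgraph_def using assms by blast
  moreover have "(a,b) \<in> adj_rel {{a,b}}" "(b,a) \<in> adj_rel {{a,b}}"
    by (auto simp: adj_rel_def insert_commute)
  ultimately show ?thesis unfolding connected_graph_def by auto
qed

lemma conn1: "connected_graph {a} {}"
  unfolding connected_graph_def sgraph_def by auto

lemma mk_special:
  assumes Z1: "isc U1 D1" and Z2: "isc U2 D2" and dj: "U1 \<inter> U2 = {}"
    and v1: "v1 \<notin> U1" "v1 \<notin> U2" and v2: "v2 \<notin> U1" "v2 \<notin> U2" and v12: "v1 \<noteq> v2"
    and w1: "w1 \<in> U1" and w2: "w2 \<in> U2"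
    and VV: "V = U1 \<union> U2 \<union> {v1, v2}"
    and EE: "E = D1 \<union> D2 \<union> {{v1,w1}, {v1,v2}, {v2,w2}}"
  shows "special (2 * k + 3) VF EF V E"
proof -
  have e2: "2 * k + 3 + 1 = (k + 2) * 2" by simp
  have q: "(2 * k + 3 + 1) div (k + 2) = 2"
    unfolding e2 by (rule nonzero_mult_div_cancel_left) simp
  have r: "(2 * k + 3 + 1) mod (k + 2) = 0"
    unfolding e2 by (rule mod_mult_self1_is_0)
  have i12: "{1..2::nat} = {1,2}" by auto
  define vv where "vv = (\<lambda>i::nat. if i = 1 then v1 else v2)"
  define FV where "FV = (\<lambda>i::nat. if i = 1 then U1 else U2)"
  define FE where "FE = (\<lambda>i::nat. if i = 1 then D1 else D2)"
  define ww where "ww = (\<lambda>i::nat. if i = 1 then w1 else w2)"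
  have A1: "inj_on vv {1..2}" using v12 unfolding i12 vv_def by auto
  have A2: "\<forall>i\<in>{1..2}. iso_copy VF EF (FV i) (FE i)"
    unfolding i12 FV_def FE_def using isc_iso[OF Z1] isc_iso[OF Z2] by auto
  have A3: "\<forall>i\<in>{1..2}. \<forall>j\<in>{1..2}. i \<noteq> j \<longrightarrow> FV i \<inter> FV j = {}"
    unfolding i12 FV_def using dj by auto
  have A4: "\<forall>i\<in>{1..2}. FV i \<inter> vv ` {1..2} = {}"
    unfolding i12 FV_def vv_def using v1 v2 by auto
  have A5: "\<forall>i\<in>{1..2}. ww i \<in> FV i" unfolding i12 FV_def ww_def using w1 w2 by auto
  have vv12: "vv ` {1..2} = {v1, v2}" unfolding i12 vv_def by auto
  have A6: "tree_graph (vv ` {1..2}) {{v1,v2}}"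
    unfolding vv12 tree_graph_def using conn2[OF v12] v12 by simp
  have A7: "connected_graph {vv 2} {} \<and> card ({}::'a set set) = 0" using conn1 by simp
  have A8: "{vv 2} \<inter> (\<Union>i\<in>{1..2}. insert (vv i) (FV i)) = {vv 2}" unfolding i12 by auto
  have A9: "V = {vv 2} \<union> (\<Union>i\<in>{1..2}. insert (vv i) (FV i))"
    unfolding i12 VV vv_def FV_def by auto
  have A10: "E = {{v1,v2}} \<union> {} \<union> (\<Union>i\<in>{1..2}. insert {vv i, ww i} (FE i))"
    unfolding i12 EE vv_def ww_def FE_def by auto
  show ?thesis
    unfolding special_def Let_def q r
    apply (rule disjI2)
    apply (rule conjI, simp)
    apply (rule exI[of _ vv], rule exI[of _ FV], rule exI[of _ FE], rule exI[of _ ww])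
    apply (rule exI[of _ "{{v1,v2}}"], rule exI[of _ "{vv 2}"], rule exI[of _ "{}"])
    using A1 A2 A3 A4 A5 A6 A7 A8 A9 A10 by blast
qed


lemma isc_ne: "isc U D \<Longrightarrow> U \<noteq> {}"
  using isc_card n3 by fastforce

lemma nbV: "x \<in> V \<Longrightarrow> nb x \<subseteq> V"
  using EsubPow by (auto simp: nb_def closed_nbhd_def)

lemma Eform: assumes "e \<in> E" obtains a b where "a \<noteq> b" "e = {a,b}" "a \<in> V" "b \<in> V"
  using Eedge[OF assms] by blast

lemma exit_special:
  assumes ab: allbad and Z: "isc UZ DZ" and vV: "v \<in> V" and vZ: "v \<notin> UZ"
    and hex: "\<forall>e\<in>E. e \<inter> UZ \<noteq> {} \<longrightarrow> \<not> e \<subseteq> UZ \<longrightarrow> v \<in> e"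
  shows "special (2 * k + 3) VF EF V E"
proof -
  obtain UQ DQ where Q: "isc UQ DQ" and Qv: "UQ \<inter> nb v = {}" using ab vV unfolding allbad_def by blast
  have UZV: "UZ \<subseteq> V" using isc_UV Z .
  have UQV: "UQ \<subseteq> V" using isc_UV Q .
  have DZE: "DZ \<subseteq> E" using isc_DE Z .
  have DQE: "DQ \<subseteq> E" using isc_DE Q .
  have hexI: "\<And>a b. {a,b} \<in> E \<Longrightarrow> a \<in> UZ \<Longrightarrow> b \<notin> UZ \<Longrightarrow> b = v"
  proof -
    fix a b assume h: "{a,b} \<in> E" "a \<in> UZ" "b \<notin> UZ"
    have "{a,b} \<inter> UZ \<noteq> {}" using h by blast
    moreover have "\<not> {a,b} \<subseteq> UZ" using h by blast
    ultimately have "v \<in> {a,b}" using hex[rule_format, OF h(1)] by blast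
    then show "b = v" using h vZ by blast
  qed
  obtain z0 where z0: "z0 \<in> UZ" using isc_ne[OF Z] by blast
  obtain z where z: "z \<in> UZ" "{z,v} \<in> E"
  proof -
    obtain e where e: "e \<in> E" "e \<inter> UZ \<noteq> {}" "e - UZ \<noteq> {}" using cut[OF UZV z0 vV vZ] by blast
    then obtain a b where ab: "a \<noteq> b" "e = {a,b}" by (elim Eform)
    show ?thesis
    proof (cases "a \<in> UZ")
      case True
      then have "b \<notin> UZ" using e ab by blast
      then have "b = v" using hexI e(1) ab True by blast
      then show ?thesis using that True e ab by blast
    next
      case False
      then have "b \<in> UZ" using e ab by blast
      moreover have "{b,a} \<in> E" using e ab by (simp add: insert_commute)
      ultimately have "a = v" using hexI False by blast
      then show ?thesis using that \<open>b \<in> UZ\<close> \<open>{b,a} \<in> E\<close> by blast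
    qed
  qed
  have znb: "z \<in> nb v" using z(2) nb_edge' by blast
  obtain wq where wq: "wq \<in> UQ" "\<forall>u\<in>UQ. u \<noteq> wq \<longrightarrow> {wq,u} \<in> DQ" using isc_center Q by blast
  have QZ: "UQ \<inter> UZ = {}"
  proof (rule ccontr)
    assume "UQ \<inter> UZ \<noteq> {}"
    then obtain y where y: "y \<in> UQ" "y \<in> UZ" by blast
    have vQ: "v \<notin> UQ" using Qv nb_self by blast
    show False
    proof (cases "wq \<in> UZ")
      case True
      have "UQ \<subseteq> UZ"
      proof
        fix u assume u: "u \<in> UQ"
        show "u \<in> UZ"
        proof (rule ccontr)
          assume uZ: "u \<notin> UZ"
          then have "u \<noteq> wq" using True by blast
          then have "{wq,u} \<in> E" using wq u DQE by blast
          then have "u = v" using hexI True uZ by blast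
          then show False using u vQ by blast
        qed
      qed
      moreover have "z \<notin> UQ" using znb Qv by blast
      ultimately have "UQ \<subseteq> UZ - {z}" by blast
      then have "card UQ \<le> card (UZ - {z})" using isc_fin[OF Z] by (simp add: card_mono)
      also have "\<dots> < card UZ" by (rule card_Diff1_less[OF isc_fin[OF Z] z(1)])
      finally show False using isc_card[OF Q] isc_card[OF Z] by simp
    next
      case False
      then have "y \<noteq> wq" using y by blast
      then have "{wq,y} \<in> E" using wq y DQE by blast
      then have "{y,wq} \<in> E" by (simp add: insert_commute)
      then have "wq = v" using hexI y False by blast
      then show False using wq vQ by blast
    qed
  qed
  define S2 where "S2 = UZ \<union> nb v"
  have S2V: "S2 \<subseteq> V" unfolding S2_def using UZV nbV[OF vV] by blast
  obtain q0 where q0: "q0 \<in> UQ" using isc_ne[OF Q] by blast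
  have q0S: "q0 \<notin> S2" using q0 QZ Qv unfolding S2_def by blast
  obtain u u' where uu: "{v,u} \<in> E" "u \<noteq> v" "u \<notin> UZ" "{u,u'} \<in> E" "u' \<notin> UZ" "u' \<notin> nb v"
  proof -
    have zS2: "z \<in> S2" unfolding S2_def using z(1) by blast
    have q0V: "q0 \<in> V" using q0 UQV by blast
    obtain e where e: "e \<in> E" "e \<inter> S2 \<noteq> {}" "e - S2 \<noteq> {}"
      using cut[OF S2V zS2 q0V q0S] by blast
    then obtain a b where ab: "a \<noteq> b" "e = {a,b}" by (elim Eform)
    have key: "\<And>a b. {a,b} \<in> E \<Longrightarrow> a \<in> S2 \<Longrightarrow> b \<notin> S2 \<Longrightarrow> thesis"
    proof -
      fix a b assume h: "{a,b} \<in> E" "a \<in> S2" "b \<notin> S2"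
      have bZ: "b \<notin> UZ" "b \<notin> nb v" using h(3) unfolding S2_def by auto
      have aZ: "a \<notin> UZ"
      proof
        assume "a \<in> UZ"
        then have "b = v" using hexI h(1) bZ by blast
        then show False using bZ nb_self by blast
      qed
      then have anb: "a \<in> nb v" using h(2) unfolding S2_def by blast
      have av: "a \<noteq> v"
      proof
        assume "a = v"
        then have "b \<in> nb v" using h(1) nb_edge by blast
        then show False using bZ by blast
      qed
      then have "{v,a} \<in> E" using anb nb_iff by blast
      then show thesis using that[of a b] av aZ h(1) bZ by blast
    qed
    show thesis
    proof (cases "a \<in> S2")
      case True
      then have "b \<notin> S2" using e ab by blast
      then show ?thesis using key e(1) ab True by blast
    next
      case False
      then have "b \<in> S2" using e ab by blast
      moreover have "{b,a} \<in> E" using e ab by (simp add: insert_commute)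
      ultimately show ?thesis using key False by blast
    qed
  qed
  have unb: "u \<in> nb v" using uu(1) nb_edge by blast
  have uQ: "u \<notin> UQ" using unb Qv by blast
  define E' where "E' = {e\<in>E. e \<inter> UZ = {}}"
  define Tout where "Tout = {e\<in>E. e \<notin> DZ \<and> e \<inter> UZ \<noteq> {}}"
  have DQE': "DQ \<subseteq> E'"
  proof
    fix e assume e: "e \<in> DQ"
    then obtain a b where "e = {a,b}" "a \<in> UQ" "b \<in> UQ" using isc_edge[OF Q e] by blast
    then show "e \<in> E'" unfolding E'_def using e DQE QZ by blast
  qed
  have e1E': "{v,u} \<in> E'" unfolding E'_def using uu vZ by blast
  have e2E': "{u,u'} \<in> E'" unfolding E'_def using uu by blast
  have e1Q: "{v,u} \<notin> DQ"
  proof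
    assume "{v,u} \<in> DQ"
    then obtain a b where "{v,u} = {a,b}" "a \<in> UQ" "b \<in> UQ" using isc_edge[OF Q] by blast
    then have "v \<in> UQ" by (auto simp: doubleton_eq_iff)
    then show False using Qv nb_self by blast
  qed
  have e2Q: "{u,u'} \<notin> DQ"
  proof
    assume "{u,u'} \<in> DQ"
    then obtain a b where "{u,u'} = {a,b}" "a \<in> UQ" "b \<in> UQ" using isc_edge[OF Q] by blast
    then have "u \<in> UQ" by (auto simp: doubleton_eq_iff)
    then show False using uQ by blast
  qed
  have e12: "{v,u} \<noteq> {u,u'}" using uu(6) nb_self by (auto simp: doubleton_eq_iff)
  have finE': "finite E'" unfolding E'_def using finE by simp
  have cE': "k + 2 \<le> card E'"
  proof -
    have "insert {v,u} (insert {u,u'} DQ) \<subseteq> E'" using DQE' e1E' e2E' by blast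
    then have "card (insert {v,u} (insert {u,u'} DQ)) \<le> card E'" using finE' by (simp add: card_mono)
    moreover have "card (insert {v,u} (insert {u,u'} DQ)) = k + 2"
      using e1Q e2Q e12 isc_finD[OF Q] isc_cardD[OF Q] by simp
    ultimately show ?thesis by simp
  qed
  have zvT: "{z,v} \<in> Tout"
  proof -
    have "{z,v} \<notin> DZ"
    proof
      assume "{z,v} \<in> DZ"
      then obtain a b where "{z,v} = {a,b}" "a \<in> UZ" "b \<in> UZ" using isc_edge[OF Z] by blast
      then show False using vZ by (auto simp: doubleton_eq_iff)
    qed
    then show ?thesis unfolding Tout_def using z by blast
  qed
  have finT: "finite Tout" unfolding Tout_def using finE by simp
  have Esplit: "E = DZ \<union> Tout \<union> E'" unfolding Tout_def E'_def using DZE by blast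
  have dj1: "DZ \<inter> Tout = {}" unfolding Tout_def by blast
  have dj2: "(DZ \<union> Tout) \<inter> E' = {}"
  proof -
    have "\<And>e. e \<in> DZ \<Longrightarrow> e \<inter> UZ \<noteq> {}"
    proof -
      fix e assume "e \<in> DZ"
      then obtain a b where "e = {a,b}" "a \<in> UZ" using isc_edge[OF Z] by blast
      then show "e \<inter> UZ \<noteq> {}" by blast
    qed
    then show ?thesis unfolding Tout_def E'_def by blast
  qed
  have cardE: "card E = k + card Tout + card E'"
  proof -
    have "card E = card (DZ \<union> Tout) + card E'"
      using Esplit dj2 isc_finD[OF Z] finT finE' by (simp add: card_Un_disjoint)
    also have "card (DZ \<union> Tout) = k + card Tout"
      using dj1 isc_finD[OF Z] finT isc_cardD[OF Z] by (simp add: card_Un_disjoint)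
    finally show ?thesis .
  qed
  have cT: "1 \<le> card Tout" using zvT finT by (metis One_nat_def Suc_leI card_gt_0_iff empty_iff)
  have cT1: "card Tout = 1" and cE'2: "card E' = k + 2" using cardE cE cE' cT by simp_all
  have Tz: "Tout = {{z,v}}" using cT1 zvT by (metis card_1_singletonE singletonD)
  have E'eq: "E' = insert {v,u} (insert {u,u'} DQ)"
  proof -
    have "insert {v,u} (insert {u,u'} DQ) \<subseteq> E'" using DQE' e1E' e2E' by blast
    moreover have "card (insert {v,u} (insert {u,u'} DQ)) = card E'"
      using e1Q e2Q e12 isc_finD[OF Q] isc_cardD[OF Q] cE'2 by simp
    ultimately show ?thesis using card_subset_eq[OF finE'] by metis
  qed
  have Eeq: "E = DZ \<union> DQ \<union> {{v,z}, {v,u}, {u,u'}}"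
    using Esplit Tz E'eq by (auto simp: insert_commute)
  have u'Q: "u' \<in> UQ"
  proof (rule ccontr)
    assume nu: "u' \<notin> UQ"
    define S3 where "S3 = UZ \<union> nb v \<union> {u'}"
    have S3V: "S3 \<subseteq> V" unfolding S3_def using UZV nbV[OF vV] uu(4) EsubPow by blast
    have q0S3: "q0 \<notin> S3" using q0 QZ Qv nu unfolding S3_def by blast
    have zS3: "z \<in> S3" unfolding S3_def using z(1) by blast
    have q0V: "q0 \<in> V" using q0 UQV by blast
    obtain e where e: "e \<in> E" "e \<inter> S3 \<noteq> {}" "e - S3 \<noteq> {}"
      using cut[OF S3V zS3 q0V q0S3] by blast
    have eZ: "e \<notin> DZ"
    proof
      assume "e \<in> DZ"
      then obtain a b where "e = {a,b}" "a \<in> UZ" "b \<in> UZ" using isc_edge[OF Z] by blast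
      then show False using e(3) unfolding S3_def by blast
    qed
    have eT: "e \<notin> Tout" using e(3) Tz unfolding S3_def using znb nb_self by auto
    have eQ: "e \<notin> DQ"
    proof
      assume "e \<in> DQ"
      then obtain a b where "e = {a,b}" "a \<in> UQ" "b \<in> UQ" using isc_edge[OF Q] by blast
      then show False using e(2) QZ Qv nu unfolding S3_def by blast
    qed
    have "e = {v,u} \<or> e = {u,u'}" using e(1) eZ eT eQ Esplit E'eq by blast
    then show False using e(3) unb nb_self unfolding S3_def by auto
  qed
  have VV: "V = UZ \<union> UQ \<union> {v, u}"
  proof
    show "UZ \<union> UQ \<union> {v, u} \<subseteq> V" using UZV UQV vV uu(1) EsubPow by blast
    show "V \<subseteq> UZ \<union> UQ \<union> {v, u}"
    proof
      fix y assume y: "y \<in> V"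
      obtain y' where y': "y' \<in> V" "y' \<noteq> y"
      proof (cases "y = v")
        case True then show ?thesis using that z UZV vZ by blast
      next
        case False then show ?thesis using that vV by blast
      qed
      obtain e where e: "e \<in> E" "y \<in> e" using vert_edge[OF y y'(1) y'(2)] by blast
      show "y \<in> UZ \<union> UQ \<union> {v, u}"
      proof -
        have "e \<in> DZ \<or> e \<in> DQ \<or> e = {v,z} \<or> e = {v,u} \<or> e = {u,u'}" using e(1) Eeq by blast
        moreover have "e \<in> DZ \<Longrightarrow> y \<in> UZ"
        proof -
          assume "e \<in> DZ"
          then obtain a b where "e = {a,b}" "a \<in> UZ" "b \<in> UZ" using isc_edge[OF Z] by blast
          then show ?thesis using e(2) by blast
        qed
        moreover have "e \<in> DQ \<Longrightarrow> y \<in> UQ"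
        proof -
          assume "e \<in> DQ"
          then obtain a b where "e = {a,b}" "a \<in> UQ" "b \<in> UQ" using isc_edge[OF Q] by blast
          then show ?thesis using e(2) by blast
        qed
        ultimately show ?thesis using e(2) z(1) u'Q by blast
      qed
    qed
  qed
  have ZQ: "UZ \<inter> UQ = {}" using QZ by blast
  show ?thesis
  proof (rule mk_special[OF Z Q ZQ])
    show "v \<notin> UZ" by (rule vZ)
    show "v \<notin> UQ" using Qv nb_self by blast
    show "u \<notin> UZ" by (rule uu(3))
    show "u \<notin> UQ" by (rule uQ)
    show "v \<noteq> u" using uu(2) by simp
    show "z \<in> UZ" by (rule z(1))
    show "u' \<in> UQ" by (rule u'Q)
    show "V = UZ \<union> UQ \<union> {v, u}" by (rule VV)
    show "E = DZ \<union> DQ \<union> {{v, z}, {v, u}, {u, u'}}" by (rule Eeq)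
  qed
qed

end

context ctx
begin

lemma avoid: "allbad \<Longrightarrow> x \<in> V \<Longrightarrow> \<exists>UQ DQ. isc UQ DQ \<and> UQ \<inter> nb x = {}"
  unfolding allbad_def by blast

lemma Dsub: "isc U D \<Longrightarrow> e \<in> D \<Longrightarrow> e \<subseteq> U"
  using isc_edge by blast

lemma Dne: "isc U D \<Longrightarrow> e \<in> D \<Longrightarrow> e \<noteq> {}"
  using isc_edge by blast

lemma Ene: "e \<in> E \<Longrightarrow> e \<noteq> {}"
  using Eedge by blast

lemma split4:
  assumes Q: "isc UQ DQ" and av: "UQ \<inter> nb x = {}"
    and crossX: "\<forall>e\<in>E. e \<inter> nb x = {} \<longrightarrow> e \<inter> A \<noteq> {} \<longrightarrow> e - A \<noteq> {} \<longrightarrow> e \<in> X"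
    and mat: "\<forall>e\<in>X. \<forall>e'\<in>X. e \<noteq> e' \<longrightarrow> e \<inter> e' = {}"
  shows "(UQ \<subseteq> A \<and> DQ \<subseteq> {e\<in>E. e \<subseteq> A - nb x}) \<or>
         (UQ \<inter> A = {} \<and> DQ \<subseteq> {e\<in>E. e \<subseteq> V - A - nb x}) \<or>
         (\<exists>a b. {a,b} \<in> X \<and> {a,b} \<in> DQ \<and> a \<in> A \<and> b \<notin> A \<and> (\<forall>u\<in>UQ. u \<noteq> a \<longrightarrow> {a,u} \<in> DQ)
            \<and> UQ \<subseteq> insert b A \<and> DQ \<subseteq> insert {a,b} {e\<in>E. e \<subseteq> A - nb x}) \<or>
         (\<exists>a b. {a,b} \<in> X \<and> {a,b} \<in> DQ \<and> a \<notin> A \<and> b \<in> A \<and> (\<forall>u\<in>UQ. u \<noteq> a \<longrightarrow> {a,u} \<in> DQ)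
            \<and> UQ \<subseteq> insert b (V - A) \<and> DQ \<subseteq> insert {a,b} {e\<in>E. e \<subseteq> V - A - nb x})"
proof -
  obtain w where w: "w \<in> UQ" "\<forall>u\<in>UQ. u \<noteq> w \<longrightarrow> {w,u} \<in> DQ" using isc_center Q by blast
  have edges: "\<forall>e\<in>DQ. \<exists>a b. a \<noteq> b \<and> e = {a,b} \<and> a \<in> UQ \<and> b \<in> UQ" using isc_edge[OF Q] by blast
  define P1 where "P1 = A - nb x"
  define P2 where "P2 = V - A - nb x"
  have UQV: "UQ \<subseteq> V" using isc_UV Q .
  have DQE: "DQ \<subseteq> E" using isc_DE Q .
  have cov: "UQ \<subseteq> P1 \<union> P2" using UQV av unfolding P1_def P2_def by blast
  have dis: "P1 \<inter> P2 = {}" "P2 \<inter> P1 = {}" unfolding P1_def P2_def by blast+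
  have crs: "\<forall>e\<in>DQ. e \<inter> P1 \<noteq> {} \<longrightarrow> e \<inter> P2 \<noteq> {} \<longrightarrow> e \<in> X"
  proof (intro ballI impI)
    fix e assume e: "e \<in> DQ" "e \<inter> P1 \<noteq> {}" "e \<inter> P2 \<noteq> {}"
    have eE: "e \<in> E" using e(1) DQE by blast
    have "e \<subseteq> UQ" using Dsub[OF Q e(1)] .
    then have a1: "e \<inter> nb x = {}" using av by blast
    have a2: "e \<inter> A \<noteq> {}" using e(2) unfolding P1_def by blast
    have a3: "e - A \<noteq> {}" using e(3) unfolding P2_def by blast
    show "e \<in> X" using crossX[rule_format, OF eE a1 a2 a3] .
  qed
  have crs': "\<forall>e\<in>DQ. e \<inter> P2 \<noteq> {} \<longrightarrow> e \<inter> P1 \<noteq> {} \<longrightarrow> e \<in> X" using crs by blast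
  have cov': "UQ \<subseteq> P2 \<union> P1" using cov by blast
  have e1: "\<And>S. DQ \<subseteq> Pow S \<Longrightarrow> DQ \<subseteq> {e\<in>E. e \<subseteq> S}" using DQE by blast
  have e2: "\<And>S c. DQ \<subseteq> insert c (Pow S) \<Longrightarrow> DQ \<subseteq> insert c {e\<in>E. e \<subseteq> S}" using DQE by blast
  show ?thesis
  proof (cases "w \<in> P1")
    case True
    from osp[OF edges w cov dis(1) crs mat True] show ?thesis
    proof
      assume h: "UQ \<subseteq> P1 \<and> DQ \<subseteq> Pow P1"
      then have "UQ \<subseteq> A" unfolding P1_def by blast
      moreover have "DQ \<subseteq> {e\<in>E. e \<subseteq> A - nb x}" using e1 h unfolding P1_def by blast
      ultimately show ?thesis by blast
    next
      assume "\<exists>b\<in>P2. {w, b} \<in> X \<and> {w, b} \<in> DQ \<and> UQ \<subseteq> insert b P1 \<and> DQ \<subseteq> insert {w, b} (Pow P1)"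
      then obtain b where b: "b \<in> P2" "{w, b} \<in> X" "{w, b} \<in> DQ" "UQ \<subseteq> insert b P1" "DQ \<subseteq> insert {w, b} (Pow P1)" by blast
      have "w \<in> A" using True unfolding P1_def by blast
      moreover have "b \<notin> A" using b(1) unfolding P2_def by blast
      moreover have "UQ \<subseteq> insert b A" using b(4) unfolding P1_def by blast
      moreover have "DQ \<subseteq> insert {w,b} {e\<in>E. e \<subseteq> A - nb x}" using e2 b(5) unfolding P1_def by blast
      ultimately show ?thesis using b(2,3) w(2) by blast
    qed
  next
    case False
    then have wP2: "w \<in> P2" using cov w(1) by blast
    from osp[OF edges w cov' dis(2) crs' mat wP2] show ?thesis
    proof
      assume h: "UQ \<subseteq> P2 \<and> DQ \<subseteq> Pow P2"
      then have "UQ \<inter> A = {}" unfolding P2_def by blast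
      moreover have "DQ \<subseteq> {e\<in>E. e \<subseteq> V - A - nb x}" using e1 h unfolding P2_def by blast
      ultimately show ?thesis by blast
    next
      assume "\<exists>b\<in>P1. {w, b} \<in> X \<and> {w, b} \<in> DQ \<and> UQ \<subseteq> insert b P2 \<and> DQ \<subseteq> insert {w, b} (Pow P2)"
      then obtain b where b: "b \<in> P1" "{w, b} \<in> X" "{w, b} \<in> DQ" "UQ \<subseteq> insert b P2" "DQ \<subseteq> insert {w, b} (Pow P2)" by blast
      have "w \<notin> A" using wP2 unfolding P2_def by blast
      moreover have "b \<in> A" using b(1) unfolding P1_def by blast
      moreover have "UQ \<subseteq> insert b (V - A)" using b(4) unfolding P2_def by blast
      moreover have "DQ \<subseteq> insert {w,b} {e\<in>E. e \<subseteq> V - A - nb x}" using e2 b(5) unfolding P2_def by blast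
      ultimately show ?thesis using b(2,3) w(2) by blast
    qed
  qed
qed

lemma side_edges:
  assumes "isc Ua Da" "isc Ub Db" "E = Da \<union> Db \<union> Y" "B \<inter> Ub = {}" "B \<inter> M = {}"
  shows "{e\<in>E. e \<subseteq> B} \<subseteq> {e\<in>Da. e \<inter> M = {}} \<union> {e\<in>Y. e \<subseteq> B}"
proof
  fix e assume e: "e \<in> {e\<in>E. e \<subseteq> B}"
  have "e \<notin> Db"
  proof
    assume "e \<in> Db"
    then have "e \<subseteq> Ub" "e \<noteq> {}" using Dsub Dne assms(2) by blast+
    then show False using e assms(4) by blast
  qed
  then show "e \<in> {e\<in>Da. e \<inter> M = {}} \<union> {e\<in>Y. e \<subseteq> B}" using e assms(3,5) by blast
qed

lemma card_le_add:
  assumes "S \<subseteq> A \<union> B" "finite A" "finite B"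
  shows "card S \<le> card A + card B"
  by (meson assms card_Un_le card_mono finite_UnI le_trans)

lemma card_ins_le:
  assumes "S \<subseteq> insert c A" "finite A"
  shows "card S \<le> card A + 1"
  by (metis Suc_eq_plus1 assms card_insert_le_m1 card_mono finite_insert le_trans card_insert_if
      le_SucI order_refl)

end

context ctx
begin

lemma pairY:
  assumes C1: "isc U1 D1" and C2: "isc U2 D2" and dj: "U1 \<inter> U2 = {}"
  shows "D1 \<inter> D2 = {}" "E = D1 \<union> D2 \<union> (E - D1 - D2)" "card (E - D1 - D2) = 3" "finite (E - D1 - D2)"
proof -
  show d: "D1 \<inter> D2 = {}"
  proof (rule ccontr)
    assume "D1 \<inter> D2 \<noteq> {}"
    then obtain e where e: "e \<in> D1" "e \<in> D2" by blast
    have "e \<subseteq> U1" "e \<subseteq> U2" "e \<noteq> {}" using Dsub[OF C1 e(1)] Dsub[OF C2 e(2)] Dne[OF C1 e(1)] by auto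
    then show False using dj by blast
  qed
  have DE: "D1 \<subseteq> E" "D2 \<subseteq> E" using isc_DE C1 C2 by auto
  then show "E = D1 \<union> D2 \<union> (E - D1 - D2)" by blast
  show "finite (E - D1 - D2)" using finE by simp
  have "card (D1 \<union> D2) = 2 * k" using d isc_finD[OF C1] isc_finD[OF C2] isc_cardD[OF C1] isc_cardD[OF C2]
    by (simp add: card_Un_disjoint)
  moreover have "card (E - (D1 \<union> D2)) = card E - card (D1 \<union> D2)"
    using DE finE by (simp add: card_Diff_subset finite_subset)
  moreover have "E - D1 - D2 = E - (D1 \<union> D2)" by blast
  ultimately show "card (E - D1 - D2) = 3" using cE by simp
qed

lemma tri_all:
  assumes "isc U D" "n = 3" "u \<in> U" "w \<in> U" "u \<noteq> w"
  shows "{u,w} \<in> D"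
proof -
  have cU: "card U = 3" using isc_card assms by simp
  have "card (U - {u,w}) = 1" using cU assms(3,4,5) isc_fin[OF assms(1)] by (simp add: card_Diff_subset)
  then obtain b where b: "U - {u,w} = {b}" by (meson card_1_singletonE)
  then have ab: "U = {u,w,b}" "b \<noteq> u" "b \<noteq> w" using assms(3,4) by auto
  have sub: "D \<subseteq> {{u,w},{u,b},{w,b}}"
  proof
    fix e assume "e \<in> D"
    then obtain x y where "x \<noteq> y" "e = {x,y}" "x \<in> U" "y \<in> U" using isc_edge assms(1) by blast
    then show "e \<in> {{u,w},{u,b},{w,b}}" using ab by (auto simp: insert_commute)
  qed
  have "card D = k" using isc_cardD assms(1) .
  moreover have "card {{u,w},{u,b},{w,b}} \<le> 3" by (auto simp: card_insert_if)
  ultimately have "D = {{u,w},{u,b},{w,b}}"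
    using k3 sub card_seteq[of "{{u,w},{u,b},{w,b}}" D] by simp
  then show ?thesis by simp
qed

lemma deg_pos: assumes "isc U D" "v \<in> U" shows "1 \<le> deg D v"
proof -
  have "card {e\<in>D. e \<inter> {v} = {}} \<le> k - 1" using cnt_any[OF assms(1), of "{v}" v] assms(2) by simp
  then show ?thesis using deg_split[OF assms(1), of v] k3 by simp
qed

lemma L3:
  assumes Q: "isc U D" and v: "v \<in> U" "v \<in> M" and MU: "M \<subseteq> U"
    and nbr: "\<forall>u\<in>U. {v,u} \<in> D \<longrightarrow> u \<in> M"
  shows "card {e\<in>D. e \<inter> M = {}} \<le> k - 3"
proof -
  obtain c where c: "c \<in> U" "\<forall>u\<in>U. u \<noteq> c \<longrightarrow> {c,u} \<in> D" using isc_center Q by blast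
  have cM: "c \<in> M"
  proof (cases "c = v")
    case False
    then have "{c,v} \<in> D" using c(2) v(1) by fastforce
    then have "{v,c} \<in> D" by (simp add: insert_commute)
    then show ?thesis using nbr c(1) by blast
  qed (use v in simp)
  show ?thesis
  proof (cases "n = 3")
    case False
    then have "4 \<le> n" using n3 by simp
    moreover have "card {e\<in>D. e \<inter> M = {}} \<le> k - (n - 1)" using cnt_cen[OF Q c MU cM] .
    ultimately show ?thesis by simp
  next
    case True
    have "U \<subseteq> M"
    proof
      fix u assume u: "u \<in> U"
      show "u \<in> M"
      proof (cases "u = v")
        case False
        then have "{v,u} \<in> D" using tri_all[OF Q True v(1) u] by simp
        then show ?thesis using nbr u by blast
      qed (use v in simp)
    qed
    then have em: "{e\<in>D. e \<inter> M = {}} = {}" using Dsub[OF Q] Dne[OF Q] by blast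
    show ?thesis unfolding em by simp
  qed
qed

lemma hub:
  assumes Q: "isc UQ DQ" and C1: "isc U1 D1" and UQb: "UQ \<subseteq> insert b U1" and b: "b \<notin> U1"
    and p: "p \<in> U1" "p \<notin> UQ" and a: "a \<in> UQ" and aU1: "a \<in> U1" and cen: "\<forall>u\<in>UQ. u \<noteq> a \<longrightarrow> {a,u} \<in> DQ"
    and DQ1: "\<forall>e\<in>DQ. e \<noteq> {a,b} \<longrightarrow> e \<subseteq> U1 \<longrightarrow> e \<in> D1"
  shows "n - 2 \<le> deg D1 a"
proof -
  have ap: "a \<noteq> p" using a p by blast
  have sub: "UQ - {b} \<subseteq> U1 - {p}" using UQb p by blast
  have f1: "finite (U1 - {p})" using isc_fin[OF C1] by simp
  have c1: "card (U1 - {p}) = n - 1" using isc_card[OF C1] isc_fin[OF C1] p(1) by simp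
  have cQ: "n - 1 \<le> card (UQ - {b})" using diff_card_le_card_Diff[of "{b}" UQ] isc_card[OF Q] by simp
  have eq: "UQ - {b} = U1 - {p}"
    using card_seteq[OF f1 sub] cQ c1 by simp
  have "\<forall>u\<in>U1 - {p, a}. {a,u} \<in> D1"
  proof
    fix u assume u: "u \<in> U1 - {p, a}"
    then have uQ: "u \<in> UQ" "u \<noteq> a" using eq by auto
    then have h1: "{a,u} \<in> DQ" using cen by blast
    have h2: "{a,u} \<noteq> {a,b}" using u b by (auto simp: doubleton_eq_iff)
    have h3: "{a,u} \<subseteq> U1" using u aU1 by blast
    show "{a,u} \<in> D1" using DQ1[rule_format, OF h1 h2 h3] .
  qed
  then have "card (U1 - {p, a}) \<le> deg D1 a" using deg_ge[OF C1, of "U1 - {p,a}" a] by blast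
  moreover have "card (U1 - {p, a}) = n - 2"
    using isc_card[OF C1] isc_fin[OF C1] p(1) aU1 ap by (simp add: card_Diff_subset)
  ultimately show ?thesis by simp
qed

lemma split4E:
  assumes Q: "isc UQ DQ" and av: "UQ \<inter> nb x = {}"
    and crossX: "\<forall>e\<in>E. e \<inter> nb x = {} \<longrightarrow> e \<inter> A \<noteq> {} \<longrightarrow> e - A \<noteq> {} \<longrightarrow> e \<in> X"
    and mat: "\<forall>e\<in>X. \<forall>e'\<in>X. e \<noteq> e' \<longrightarrow> e \<inter> e' = {}"
  obtains (S1) "UQ \<subseteq> A" "DQ \<subseteq> {e\<in>E. e \<subseteq> A - nb x}"
   | (S2) "UQ \<inter> A = {}" "DQ \<subseteq> {e\<in>E. e \<subseteq> V - A - nb x}"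
   | (X1) a b where "{a,b} \<in> X" "{a,b} \<in> DQ" "a \<in> A" "b \<notin> A" "\<forall>u\<in>UQ. u \<noteq> a \<longrightarrow> {a,u} \<in> DQ"
        "UQ \<subseteq> insert b A" "DQ \<subseteq> insert {a,b} {e\<in>E. e \<subseteq> A - nb x}"
   | (X2) a b where "{a,b} \<in> X" "{a,b} \<in> DQ" "a \<notin> A" "b \<in> A" "\<forall>u\<in>UQ. u \<noteq> a \<longrightarrow> {a,u} \<in> DQ"
        "UQ \<subseteq> insert b (V - A)" "DQ \<subseteq> insert {a,b} {e\<in>E. e \<subseteq> V - A - nb x}"
proof -
  note sp = split4[OF Q av crossX mat]
  show thesis
  proof (rule disjE[OF sp])
    assume "UQ \<subseteq> A \<and> DQ \<subseteq> {e\<in>E. e \<subseteq> A - nb x}"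
    then show thesis using S1 by (elim conjE)
  next
    assume sp2: "(UQ \<inter> A = {} \<and> DQ \<subseteq> {e\<in>E. e \<subseteq> V - A - nb x}) \<or>
         (\<exists>a b. {a,b} \<in> X \<and> {a,b} \<in> DQ \<and> a \<in> A \<and> b \<notin> A \<and> (\<forall>u\<in>UQ. u \<noteq> a \<longrightarrow> {a,u} \<in> DQ)
            \<and> UQ \<subseteq> insert b A \<and> DQ \<subseteq> insert {a,b} {e\<in>E. e \<subseteq> A - nb x}) \<or>
         (\<exists>a b. {a,b} \<in> X \<and> {a,b} \<in> DQ \<and> a \<notin> A \<and> b \<in> A \<and> (\<forall>u\<in>UQ. u \<noteq> a \<longrightarrow> {a,u} \<in> DQ)
            \<and> UQ \<subseteq> insert b (V - A) \<and> DQ \<subseteq> insert {a,b} {e\<in>E. e \<subseteq> V - A - nb x})"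
    show thesis
    proof (rule disjE[OF sp2])
      assume "UQ \<inter> A = {} \<and> DQ \<subseteq> {e\<in>E. e \<subseteq> V - A - nb x}"
      then show thesis using S2 by (elim conjE)
    next
      assume sp3: "(\<exists>a b. {a,b} \<in> X \<and> {a,b} \<in> DQ \<and> a \<in> A \<and> b \<notin> A \<and> (\<forall>u\<in>UQ. u \<noteq> a \<longrightarrow> {a,u} \<in> DQ)
            \<and> UQ \<subseteq> insert b A \<and> DQ \<subseteq> insert {a,b} {e\<in>E. e \<subseteq> A - nb x}) \<or>
         (\<exists>a b. {a,b} \<in> X \<and> {a,b} \<in> DQ \<and> a \<notin> A \<and> b \<in> A \<and> (\<forall>u\<in>UQ. u \<noteq> a \<longrightarrow> {a,u} \<in> DQ)
            \<and> UQ \<subseteq> insert b (V - A) \<and> DQ \<subseteq> insert {a,b} {e\<in>E. e \<subseteq> V - A - nb x})"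
      show thesis
      proof (rule disjE[OF sp3])
        assume "\<exists>a b. {a,b} \<in> X \<and> {a,b} \<in> DQ \<and> a \<in> A \<and> b \<notin> A \<and> (\<forall>u\<in>UQ. u \<noteq> a \<longrightarrow> {a,u} \<in> DQ)
            \<and> UQ \<subseteq> insert b A \<and> DQ \<subseteq> insert {a,b} {e\<in>E. e \<subseteq> A - nb x}"
        then obtain a b where "{a,b} \<in> X \<and> {a,b} \<in> DQ \<and> a \<in> A \<and> b \<notin> A \<and> (\<forall>u\<in>UQ. u \<noteq> a \<longrightarrow> {a,u} \<in> DQ)
            \<and> UQ \<subseteq> insert b A \<and> DQ \<subseteq> insert {a,b} {e\<in>E. e \<subseteq> A - nb x}" by (elim exE)
        then show thesis using X1 by (elim conjE)
      next
        assume "\<exists>a b. {a,b} \<in> X \<and> {a,b} \<in> DQ \<and> a \<notin> A \<and> b \<in> A \<and> (\<forall>u\<in>UQ. u \<noteq> a \<longrightarrow> {a,u} \<in> DQ)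
            \<and> UQ \<subseteq> insert b (V - A) \<and> DQ \<subseteq> insert {a,b} {e\<in>E. e \<subseteq> V - A - nb x}"
        then obtain a b where "{a,b} \<in> X \<and> {a,b} \<in> DQ \<and> a \<notin> A \<and> b \<in> A \<and> (\<forall>u\<in>UQ. u \<noteq> a \<longrightarrow> {a,u} \<in> DQ)
            \<and> UQ \<subseteq> insert b (V - A) \<and> DQ \<subseteq> insert {a,b} {e\<in>E. e \<subseteq> V - A - nb x}" by (elim exE)
        then show thesis using X2 by (elim conjE)
      qed
    qed
  qed
qed

lemma leaf_J3D:
  assumes ab: allbad and C1: "isc U1 D1" and C2: "isc U2 D2" and dj: "U1 \<inter> U2 = {}"
    and Y: "E - D1 - D2 = {{x,u},{x,u'},g}" and x: "x \<in> U2" and u: "u \<in> U1" "u' \<in> U1" "u \<noteq> u'"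
    and g: "g \<inter> U1 \<noteq> {}"
  shows False
proof -
  have Esp: "E = D1 \<union> D2 \<union> {{x,u},{x,u'},g}" using pairY(2)[OF C1 C2 dj] Y by simp
  have xV: "x \<in> V" using x isc_UV[OF C2] by blast
  obtain UQ DQ where Q: "isc UQ DQ" and av: "UQ \<inter> nb x = {}" using avoid[OF ab xV] by blast
  have xuE: "{x,u} \<in> E" "{x,u'} \<in> E" using Esp by auto
  have unb: "u \<in> nb x" "u' \<in> nb x" using xuE nb_edge by auto
  obtain c2 where c2: "c2 \<in> U2" "\<forall>v\<in>U2. v \<noteq> c2 \<longrightarrow> {c2,v} \<in> D2" using isc_center C2 by blast
  have c2nb: "c2 \<in> nb x" using center_nb(1)[OF C2 c2 x] .
  have xnb: "x \<in> nb x" by (rule nb_self)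
  have crossX: "\<forall>e\<in>E. e \<inter> nb x = {} \<longrightarrow> e \<inter> U1 \<noteq> {} \<longrightarrow> e - U1 \<noteq> {} \<longrightarrow> e \<in> {g}"
  proof (intro ballI impI)
    fix e assume e: "e \<in> E" "e \<inter> nb x = {}" "e \<inter> U1 \<noteq> {}" "e - U1 \<noteq> {}"
    have "e \<notin> D1" using e(4) Dsub[OF C1] by blast
    moreover have "e \<notin> D2" using e(3) Dsub[OF C2] dj by blast
    moreover have "e \<noteq> {x,u}" "e \<noteq> {x,u'}" using e(2) xnb by auto
    ultimately show "e \<in> {g}" using e(1) Esp by blast
  qed
  have mat: "\<forall>e\<in>{g}. \<forall>e'\<in>{g}. e \<noteq> e' \<longrightarrow> e \<inter> e' = {}" by simp
  have cQ: "card DQ = k" using isc_cardD[OF Q] .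
  have fD1: "finite {e\<in>D1. e \<inter> {u,u'} = {}}" using isc_finD[OF C1] by simp
  have fD2: "finite {e\<in>D2. e \<inter> {x,c2} = {}}" using isc_finD[OF C2] by simp
  have b1: "card {e\<in>D1. e \<inter> {u,u'} = {}} \<le> k - 2"
    using cnt_two[OF C1 _ _ _ u(3), of "{u,u'}"] u by simp
  have b2: "card {e\<in>D2. e \<inter> {x,c2} = {}} \<le> k - (n - 1)"
    using cnt_cen[OF C2 c2, of "{x,c2}"] x c2(1) by simp
  have SS1: "{e\<in>E. e \<subseteq> U1 - nb x} \<subseteq> {e\<in>D1. e \<inter> {u,u'} = {}} \<union> {e\<in>E - D1 - D2. e \<subseteq> U1 - nb x}"
  proof -
    have h1: "(U1 - nb x) \<inter> U2 = {}" using dj by blast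
    have h2: "(U1 - nb x) \<inter> {u,u'} = {}" using unb by blast
    show ?thesis using side_edges[OF C1 C2 pairY(2)[OF C1 C2 dj] h1 h2] .
  qed
  have Y1: "{e\<in>E - D1 - D2. e \<subseteq> U1 - nb x} \<subseteq> {g}" using Y x dj by auto
  have Y1': "\<not> g \<subseteq> U1 \<Longrightarrow> {e\<in>E - D1 - D2. e \<subseteq> U1 - nb x} = {}" using Y x dj by auto
  have SS2: "{e\<in>E. e \<subseteq> V - U1 - nb x} \<subseteq> {e\<in>D2. e \<inter> {x,c2} = {}} \<union> {e\<in>E - D1 - D2. e \<subseteq> V - U1 - nb x}"
  proof -
    have E21: "E = D2 \<union> D1 \<union> (E - D1 - D2)" using pairY(2)[OF C1 C2 dj] by blast
    have h1: "(V - U1 - nb x) \<inter> U1 = {}" by blast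
    have h2: "(V - U1 - nb x) \<inter> {x,c2} = {}" using xnb c2nb by blast
    show ?thesis using side_edges[OF C2 C1 E21 h1 h2] .
  qed
  have Y2: "{e\<in>E - D1 - D2. e \<subseteq> V - U1 - nb x} = {}" using Y u g by auto
  have fY: "finite (E - D1 - D2)" using pairY(4)[OF C1 C2 dj] .
  have n3': "3 \<le> n" by (rule n3)
  show False
  proof (cases rule: split4E[OF Q av crossX mat, case_names S1 S2 X1 X2])
    case S1
    have "DQ \<subseteq> {e\<in>D1. e \<inter> {u,u'} = {}} \<union> {g}"
      using order_trans[OF order_trans[OF S1(2) SS1] Un_mono[OF order_refl Y1]] .
    then have "card DQ \<le> card {e\<in>D1. e \<inter> {u,u'} = {}} + card {g}"
      using card_le_add[OF _ fD1, of DQ "{g}"] by simp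
    then show False using cQ b1 k3 by simp
  next
    case S2
    have "DQ \<subseteq> {e\<in>D2. e \<inter> {x,c2} = {}}" using order_trans[OF S2(2) SS2] unfolding Y2 by simp
    then have "card DQ \<le> card {e\<in>D2. e \<inter> {x,c2} = {}}" using fD2 by (simp add: card_mono)
    then show False using cQ b2 n3' k3 by simp
  next
    case (X1 a b)
    have "\<not> g \<subseteq> U1" using X1(1,4) by blast
    then have "DQ \<subseteq> insert {a,b} {e\<in>D1. e \<inter> {u,u'} = {}}"
      using order_trans[OF X1(7) insert_mono[OF SS1]] unfolding Y1'[OF \<open>\<not> g \<subseteq> U1\<close>] by simp
    then have "card DQ \<le> card {e\<in>D1. e \<inter> {u,u'} = {}} + 1" using card_ins_le[OF _ fD1] by blast
    then show False using cQ b1 k3 by simp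
  next
    case (X2 a b)
    have "DQ \<subseteq> insert {a,b} {e\<in>D2. e \<inter> {x,c2} = {}}"
      using order_trans[OF X2(7) insert_mono[OF SS2]] unfolding Y2 by simp
    then have "card DQ \<le> card {e\<in>D2. e \<inter> {x,c2} = {}} + 1" using card_ins_le[OF _ fD2] by blast
    then show False using cQ b2 n3' k3 by simp
  qed
qed

end

context ctx
begin

lemma inD1:
  assumes C1: "isc U1 D1" and C2: "isc U2 D2" and dj: "U1 \<inter> U2 = {}"
    and e: "e \<in> E" "e \<subseteq> U1" "e \<notin> E - D1 - D2"
  shows "e \<in> D1"
proof -
  have "e \<notin> D2"
  proof
    assume "e \<in> D2"
    then have "e \<subseteq> U2" "e \<noteq> {}" using Dsub[OF C2] Dne[OF C2] by auto
    then show False using e(2) dj by blast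
  qed
  then show ?thesis using e by blast
qed

lemma deg_le: assumes "isc U D" shows "deg D v \<le> k"
proof -
  have "deg D v \<le> card D" unfolding deg_def using isc_finD[OF assms] by (simp add: card_mono)
  then show ?thesis using isc_cardD[OF assms] by simp
qed

lemma leaf_J3M_half:
  assumes ab: allbad and C1: "isc U1 D1" and C2: "isc U2 D2" and dj: "U1 \<inter> U2 = {}"
    and Y: "E - D1 - D2 = {{p1,q1},{p2,q2},{p3,q3}}"
    and pU: "p1 \<in> U1" "p2 \<in> U1" "p3 \<in> U1" and qU: "q1 \<in> U2" "q2 \<in> U2" "q3 \<in> U2"
    and pd: "p2 \<noteq> p3" and qd: "q2 \<noteq> q3"
  shows "deg D1 p1 \<le> 1 \<and> (n - 2 \<le> deg D1 p2 \<or> n - 2 \<le> deg D1 p3)"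
proof -
  have Esp: "E = D1 \<union> D2 \<union> {{p1,q1},{p2,q2},{p3,q3}}" using pairY(2)[OF C1 C2 dj] Y by simp
  have xV: "q1 \<in> V" using qU isc_UV[OF C2] by blast
  obtain UQ DQ where Q: "isc UQ DQ" and av: "UQ \<inter> nb q1 = {}" using avoid[OF ab xV] by blast
  have p1nb: "p1 \<in> nb q1" using Esp nb_edge' by blast
  obtain c2 where c2: "c2 \<in> U2" "\<forall>v\<in>U2. v \<noteq> c2 \<longrightarrow> {c2,v} \<in> D2" using isc_center C2 by blast
  have c2nb: "c2 \<in> nb q1" using center_nb(1)[OF C2 c2 qU(1)] .
  have xnb: "q1 \<in> nb q1" by (rule nb_self)
  define X where "X = {{p2,q2},{p3,q3}}"
  have crossX: "\<forall>e\<in>E. e \<inter> nb q1 = {} \<longrightarrow> e \<inter> U1 \<noteq> {} \<longrightarrow> e - U1 \<noteq> {} \<longrightarrow> e \<in> X"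
  proof (intro ballI impI)
    fix e assume e: "e \<in> E" "e \<inter> nb q1 = {}" "e \<inter> U1 \<noteq> {}" "e - U1 \<noteq> {}"
    have "e \<notin> D1" using e(4) Dsub[OF C1] by blast
    moreover have "e \<notin> D2" using e(3) Dsub[OF C2] dj by blast
    moreover have "e \<noteq> {p1,q1}" using e(2) xnb by auto
    ultimately show "e \<in> X" using e(1) Esp unfolding X_def by blast
  qed
  have mat: "\<forall>e\<in>X. \<forall>e'\<in>X. e \<noteq> e' \<longrightarrow> e \<inter> e' = {}"
    unfolding X_def using pd qd pU qU dj by auto
  have cQ: "card DQ = k" using isc_cardD[OF Q] .
  have fD1: "finite {e\<in>D1. e \<inter> {p1} = {}}" using isc_finD[OF C1] by simp
  have fD2: "finite {e\<in>D2. e \<inter> {q1,c2} = {}}" using isc_finD[OF C2] by simp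
  have b1: "card {e\<in>D1. e \<inter> {p1} = {}} = k - deg D1 p1" using deg_split[OF C1] .
  have dp: "1 \<le> deg D1 p1" using deg_pos[OF C1 pU(1)] .
  have b2: "card {e\<in>D2. e \<inter> {q1,c2} = {}} \<le> k - (n - 1)"
    using cnt_cen[OF C2 c2, of "{q1,c2}"] qU c2(1) by simp
  have SS1: "{e\<in>E. e \<subseteq> U1 - nb q1} \<subseteq> {e\<in>D1. e \<inter> {p1} = {}} \<union> {e\<in>E - D1 - D2. e \<subseteq> U1 - nb q1}"
  proof -
    have h1: "(U1 - nb q1) \<inter> U2 = {}" using dj by blast
    have h2: "(U1 - nb q1) \<inter> {p1} = {}" using p1nb by blast
    show ?thesis using side_edges[OF C1 C2 pairY(2)[OF C1 C2 dj] h1 h2] .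
  qed
  have Y1: "{e\<in>E - D1 - D2. e \<subseteq> U1 - nb q1} = {}" using Y qU dj by auto
  have SS2: "{e\<in>E. e \<subseteq> V - U1 - nb q1} \<subseteq> {e\<in>D2. e \<inter> {q1,c2} = {}} \<union> {e\<in>E - D1 - D2. e \<subseteq> V - U1 - nb q1}"
  proof -
    have E21: "E = D2 \<union> D1 \<union> (E - D1 - D2)" using pairY(2)[OF C1 C2 dj] by blast
    have h1: "(V - U1 - nb q1) \<inter> U1 = {}" by blast
    have h2: "(V - U1 - nb q1) \<inter> {q1,c2} = {}" using xnb c2nb by blast
    show ?thesis using side_edges[OF C2 C1 E21 h1 h2] .
  qed
  have Y2: "{e\<in>E - D1 - D2. e \<subseteq> V - U1 - nb q1} = {}" using Y pU by auto
  have n3': "3 \<le> n" by (rule n3)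
  show ?thesis
  proof (cases rule: split4E[OF Q av crossX mat, case_names S1 S2 X1 X2])
    case S1
    have "DQ \<subseteq> {e\<in>D1. e \<inter> {p1} = {}}" using order_trans[OF S1(2) SS1] unfolding Y1 by simp
    then have "card DQ \<le> card {e\<in>D1. e \<inter> {p1} = {}}" using fD1 by (simp add: card_mono)
    then show ?thesis using cQ b1 dp k3 by simp
  next
    case S2
    have "DQ \<subseteq> {e\<in>D2. e \<inter> {q1,c2} = {}}" using order_trans[OF S2(2) SS2] unfolding Y2 by simp
    then have "card DQ \<le> card {e\<in>D2. e \<inter> {q1,c2} = {}}" using fD2 by (simp add: card_mono)
    then show ?thesis using cQ b2 n3' k3 by simp
  next
    case (X2 a b)
    have "DQ \<subseteq> insert {a,b} {e\<in>D2. e \<inter> {q1,c2} = {}}"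
      using order_trans[OF X2(7) insert_mono[OF SS2]] unfolding Y2 by simp
    then have "card DQ \<le> card {e\<in>D2. e \<inter> {q1,c2} = {}} + 1" using card_ins_le[OF _ fD2] by blast
    then show ?thesis using cQ b2 n3' k3 by simp
  next
    case (X1 a b)
    have DQs: "DQ \<subseteq> insert {a,b} {e\<in>D1. e \<inter> {p1} = {}}"
      using order_trans[OF X1(7) insert_mono[OF SS1]] unfolding Y1 by simp
    then have "card DQ \<le> card {e\<in>D1. e \<inter> {p1} = {}} + 1" using card_ins_le[OF _ fD1] by blast
    then have d1: "deg D1 p1 \<le> 1" using cQ b1 deg_le[OF C1, of p1] by simp
    have aQ: "a \<in> UQ" using Dsub[OF Q X1(2)] by blast
    have p1Q: "p1 \<notin> UQ" using p1nb av by blast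
    have DQ1: "\<forall>e\<in>DQ. e \<noteq> {a,b} \<longrightarrow> e \<subseteq> U1 \<longrightarrow> e \<in> D1" using DQs by blast
    have "n - 2 \<le> deg D1 a" using hub[OF Q C1 X1(6) X1(4) pU(1) p1Q aQ X1(3) X1(5) DQ1] .
    moreover have "a = p2 \<or> a = p3" using X1(1,3) qU dj unfolding X_def by (auto simp: doubleton_eq_iff)
    ultimately show ?thesis using d1 by blast
  qed
qed

lemma leaf_B2_half:
  assumes ab: allbad and C1: "isc U1 D1" and C2: "isc U2 D2" and dj: "U1 \<inter> U2 = {}"
    and Y: "E - D1 - D2 = {{p,q},{p',q'},f}"
    and pU: "p \<in> U1" "p' \<in> U1" and qU: "q \<in> U2" "q' \<in> U2" and qd: "q \<noteq> q'"
    and f: "f \<inter> U1 = {}"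
  shows "deg D1 p \<le> 1 \<and> n - 2 \<le> deg D1 p'"
proof -
  have Esp: "E = D1 \<union> D2 \<union> {{p,q},{p',q'},f}" using pairY(2)[OF C1 C2 dj] Y by simp
  have fne: "f \<noteq> {}" using Esp Ene by blast
  have xV: "q \<in> V" using qU isc_UV[OF C2] by blast
  obtain UQ DQ where Q: "isc UQ DQ" and av: "UQ \<inter> nb q = {}" using avoid[OF ab xV] by blast
  have pnb: "p \<in> nb q" using Esp nb_edge' by blast
  have xnb: "q \<in> nb q" by (rule nb_self)
  define X where "X = {{p',q'}}"
  have crossX: "\<forall>e\<in>E. e \<inter> nb q = {} \<longrightarrow> e \<inter> U1 \<noteq> {} \<longrightarrow> e - U1 \<noteq> {} \<longrightarrow> e \<in> X"
  proof (intro ballI impI)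
    fix e assume e: "e \<in> E" "e \<inter> nb q = {}" "e \<inter> U1 \<noteq> {}" "e - U1 \<noteq> {}"
    have "e \<notin> D1" using e(4) Dsub[OF C1] by blast
    moreover have "e \<notin> D2" using e(3) Dsub[OF C2] dj by blast
    moreover have "e \<noteq> {p,q}" using e(2) xnb by auto
    moreover have "e \<noteq> f" using e(3) f by blast
    ultimately show "e \<in> X" using e(1) Esp unfolding X_def by blast
  qed
  have mat: "\<forall>e\<in>X. \<forall>e'\<in>X. e \<noteq> e' \<longrightarrow> e \<inter> e' = {}" unfolding X_def by simp
  have cQ: "card DQ = k" using isc_cardD[OF Q] .
  define M2 where "M2 = U2 \<inter> nb q"
  have fD1: "finite {e\<in>D1. e \<inter> {p} = {}}" using isc_finD[OF C1] by simp
  have fD2: "finite {e\<in>D2. e \<inter> M2 = {}}" using isc_finD[OF C2] by simp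
  have b1: "card {e\<in>D1. e \<inter> {p} = {}} = k - deg D1 p" using deg_split[OF C1] .
  have dp: "1 \<le> deg D1 p" using deg_pos[OF C1 pU(1)] .
  have b2: "card {e\<in>D2. e \<inter> M2 = {}} \<le> k - 3"
  proof (rule L3[OF C2 qU(1)])
    show "q \<in> M2" unfolding M2_def using qU xnb by blast
    show "M2 \<subseteq> U2" unfolding M2_def by blast
    show "\<forall>u\<in>U2. {q,u} \<in> D2 \<longrightarrow> u \<in> M2"
      unfolding M2_def using isc_DE[OF C2] nb_edge by blast
  qed
  have SS1: "{e\<in>E. e \<subseteq> U1 - nb q} \<subseteq> {e\<in>D1. e \<inter> {p} = {}} \<union> {e\<in>E - D1 - D2. e \<subseteq> U1 - nb q}"
  proof -
    have h1: "(U1 - nb q) \<inter> U2 = {}" using dj by blast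
    have h2: "(U1 - nb q) \<inter> {p} = {}" using pnb by blast
    show ?thesis using side_edges[OF C1 C2 pairY(2)[OF C1 C2 dj] h1 h2] .
  qed
  have Y1: "{e\<in>E - D1 - D2. e \<subseteq> U1 - nb q} = {}" using Y qU dj f fne by auto
  have SS2: "{e\<in>E. e \<subseteq> V - U1 - nb q} \<subseteq> {e\<in>D2. e \<inter> M2 = {}} \<union> {e\<in>E - D1 - D2. e \<subseteq> V - U1 - nb q}"
  proof -
    have E21: "E = D2 \<union> D1 \<union> (E - D1 - D2)" using pairY(2)[OF C1 C2 dj] by blast
    have h1: "(V - U1 - nb q) \<inter> U1 = {}" by blast
    have h2: "(V - U1 - nb q) \<inter> M2 = {}" unfolding M2_def by blast
    show ?thesis using side_edges[OF C2 C1 E21 h1 h2] .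
  qed
  have Y2: "{e\<in>E - D1 - D2. e \<subseteq> V - U1 - nb q} \<subseteq> {f}" using Y pU by auto
  show ?thesis
  proof (cases rule: split4E[OF Q av crossX mat, case_names S1 S2 X1 X2])
    case S1
    have "DQ \<subseteq> {e\<in>D1. e \<inter> {p} = {}}" using order_trans[OF S1(2) SS1] unfolding Y1 by simp
    then have "card DQ \<le> card {e\<in>D1. e \<inter> {p} = {}}" using fD1 by (simp add: card_mono)
    then show ?thesis using cQ b1 dp k3 by simp
  next
    case S2
    have "DQ \<subseteq> {e\<in>D2. e \<inter> M2 = {}} \<union> {f}"
      using order_trans[OF order_trans[OF S2(2) SS2] Un_mono[OF order_refl Y2]] .
    then have "card DQ \<le> card {e\<in>D2. e \<inter> M2 = {}} + card {f}"
      using card_le_add[OF _ fD2, of DQ "{f}"] by simp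
    then show ?thesis using cQ b2 k3 by simp
  next
    case (X2 a b)
    have "DQ \<subseteq> insert {a,b} ({e\<in>D2. e \<inter> M2 = {}} \<union> {f})"
      using order_trans[OF X2(7) insert_mono[OF order_trans[OF SS2 Un_mono[OF order_refl Y2]]]] .
    moreover have fU: "finite ({e\<in>D2. e \<inter> M2 = {}} \<union> {f})" using fD2 by simp
    ultimately have "card DQ \<le> card ({e\<in>D2. e \<inter> M2 = {}} \<union> {f}) + 1" by (rule card_ins_le)
    moreover have "card ({e\<in>D2. e \<inter> M2 = {}} \<union> {f}) \<le> card {e\<in>D2. e \<inter> M2 = {}} + 1"
      using card_Un_le[of "{e\<in>D2. e \<inter> M2 = {}}" "{f}"] by simp
    ultimately show ?thesis using cQ b2 k3 by simp
  next
    case (X1 a b)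
    have DQs: "DQ \<subseteq> insert {a,b} {e\<in>D1. e \<inter> {p} = {}}"
      using order_trans[OF X1(7) insert_mono[OF SS1]] unfolding Y1 by simp
    then have "card DQ \<le> card {e\<in>D1. e \<inter> {p} = {}} + 1" using card_ins_le[OF _ fD1] by blast
    then have d1: "deg D1 p \<le> 1" using cQ b1 deg_le[OF C1, of p] by simp
    have aQ: "a \<in> UQ" using Dsub[OF Q X1(2)] by blast
    have pQ: "p \<notin> UQ" using pnb av by blast
    have DQ1: "\<forall>e\<in>DQ. e \<noteq> {a,b} \<longrightarrow> e \<subseteq> U1 \<longrightarrow> e \<in> D1" using DQs by blast
    have "n - 2 \<le> deg D1 a" using hub[OF Q C1 X1(6) X1(4) pU(1) pQ aQ X1(3) X1(5) DQ1] .
    moreover have "a = p'" using X1(1,3) qU dj unfolding X_def by (auto simp: doubleton_eq_iff)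
    ultimately show ?thesis using d1 by blast
  qed
qed

end

context ctx
begin

lemma leaf_A1:
  assumes ab: allbad and C1: "isc U1 D1" and C2: "isc U2 D2" and dj: "U1 \<inter> U2 = {}"
    and mn: "\<forall>U D. isc U D \<longrightarrow> 2 \<le> outd U D"
    and Y: "E - D1 - D2 = {{p,q},{r,zo},{w,zz}}"
    and pU: "p \<in> U1" "r \<in> U1" and qU: "q \<in> U2" "w \<in> U2"
    and zo: "zo \<notin> U1" "zo \<notin> U2" "zz \<notin> U1" "zz \<notin> U2" "zo \<noteq> zz"
  shows False
proof -
  have Esp: "E = D1 \<union> D2 \<union> {{p,q},{r,zo},{w,zz}}" using pairY(2)[OF C1 C2 dj] Y by simp
  have xV: "p \<in> V" using pU isc_UV[OF C1] by blast
  obtain UQ DQ where Q: "isc UQ DQ" and av: "UQ \<inter> nb p = {}" using avoid[OF ab xV] by blast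
  have qnb: "q \<in> nb p" using Esp nb_edge by blast
  have xnb: "p \<in> nb p" by (rule nb_self)
  obtain c1 where c1: "c1 \<in> U1" "\<forall>v\<in>U1. v \<noteq> c1 \<longrightarrow> {c1,v} \<in> D1" using isc_center C1 by blast
  have c1nb: "c1 \<in> nb p" using center_nb(1)[OF C1 c1 pU(1)] .
  define A where "A = insert zo U1"
  have AU2: "A \<inter> U2 = {}" unfolding A_def using dj zo by blast
  have crossX: "\<forall>e\<in>E. e \<inter> nb p = {} \<longrightarrow> e \<inter> A \<noteq> {} \<longrightarrow> e - A \<noteq> {} \<longrightarrow> e \<in> {}"
  proof (intro ballI impI)
    fix e assume e: "e \<in> E" "e \<inter> nb p = {}" "e \<inter> A \<noteq> {}" "e - A \<noteq> {}"
    have "e \<notin> D1" using e(4) Dsub[OF C1] unfolding A_def by blast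
    moreover have "e \<notin> D2" using e(3) Dsub[OF C2] AU2 by blast
    moreover have "e \<noteq> {p,q}" using e(2) xnb by auto
    moreover have "e \<noteq> {r,zo}" using e(4) pU unfolding A_def by auto
    moreover have "e \<noteq> {w,zz}" using e(3) qU zo AU2 unfolding A_def by auto
    ultimately show "e \<in> {}" using e(1) Esp by blast
  qed
  have mat: "\<forall>e\<in>{}. \<forall>e'\<in>{}. e \<noteq> e' \<longrightarrow> e \<inter> e' = {}" by simp
  have cQ: "card DQ = k" using isc_cardD[OF Q] .
  have fD1: "finite {e\<in>D1. e \<inter> {p,c1} = {}}" using isc_finD[OF C1] by simp
  have fD2: "finite {e\<in>D2. e \<inter> {q} = {}}" using isc_finD[OF C2] by simp
  have b1: "card {e\<in>D1. e \<inter> {p,c1} = {}} \<le> k - (n - 1)"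
    using cnt_cen[OF C1 c1, of "{p,c1}"] pU c1(1) by simp
  have b2: "card {e\<in>D2. e \<inter> {q} = {}} = k - deg D2 q" using deg_split[OF C2] .
  have SS1: "{e\<in>E. e \<subseteq> A - nb p} \<subseteq> {e\<in>D1. e \<inter> {p,c1} = {}} \<union> {e\<in>E - D1 - D2. e \<subseteq> A - nb p}"
  proof -
    have h1: "(A - nb p) \<inter> U2 = {}" using AU2 by blast
    have h2: "(A - nb p) \<inter> {p,c1} = {}" using xnb c1nb by blast
    show ?thesis using side_edges[OF C1 C2 pairY(2)[OF C1 C2 dj] h1 h2] .
  qed
  have Y1: "{e\<in>E - D1 - D2. e \<subseteq> A - nb p} \<subseteq> {{r,zo}}" using Y qU AU2 xnb by auto
  have SS2: "{e\<in>E. e \<subseteq> V - A - nb p} \<subseteq> {e\<in>D2. e \<inter> {q} = {}} \<union> {e\<in>E - D1 - D2. e \<subseteq> V - A - nb p}"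
  proof -
    have E21: "E = D2 \<union> D1 \<union> (E - D1 - D2)" using pairY(2)[OF C1 C2 dj] by blast
    have h1: "(V - A - nb p) \<inter> U1 = {}" unfolding A_def by blast
    have h2: "(V - A - nb p) \<inter> {q} = {}" using qnb by blast
    show ?thesis using side_edges[OF C2 C1 E21 h1 h2] .
  qed
  have Y2: "{e\<in>E - D1 - D2. e \<subseteq> V - A - nb p} \<subseteq> {{w,zz}}" using Y pU unfolding A_def by auto
  have n3': "3 \<le> n" by (rule n3)
  show False
  proof (cases rule: split4E[OF Q av crossX mat, case_names S1 S2 X1 X2])
    case S1
    have "DQ \<subseteq> {e\<in>D1. e \<inter> {p,c1} = {}} \<union> {{r,zo}}"
      using order_trans[OF order_trans[OF S1(2) SS1] Un_mono[OF order_refl Y1]] .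
    then have "card DQ \<le> card {e\<in>D1. e \<inter> {p,c1} = {}} + card {{r,zo}}"
      using card_le_add[OF _ fD1, of DQ "{{r,zo}}"] by simp
    then show False using cQ b1 n3' k3 by simp
  next
    case (X1 a b) then show False by simp
  next
    case (X2 a b) then show False by simp
  next
    case S2
    define S where "S = {e\<in>D2. e \<inter> {q} = {}} \<union> {{w,zz}}"
    have DS: "DQ \<subseteq> S" unfolding S_def
      using order_trans[OF order_trans[OF S2(2) SS2] Un_mono[OF order_refl Y2]] .
    have fS: "finite S" unfolding S_def using fD2 by simp
    have cS: "card S \<le> k - deg D2 q + 1" unfolding S_def
      using card_Un_le[of "{e\<in>D2. e \<inter> {q} = {}}" "{{w,zz}}"] b2 by simp
    have dq: "deg D2 q \<le> 1" using card_mono[OF fS DS] cS cQ deg_le[OF C2, of q] by simp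
    have cSD: "card (S - DQ) = card S - k" using card_Diff_subset[OF _ DS] fS cQ finite_subset[OF DS fS] by simp
    have T: "{e\<in>E. e \<notin> DQ \<and> e \<inter> UQ \<noteq> {}} \<subseteq> (S - DQ) \<union> {e\<in>D2. q \<in> e}"
    proof
      fix e assume e: "e \<in> {e\<in>E. e \<notin> DQ \<and> e \<inter> UQ \<noteq> {}}"
      then have eE: "e \<in> E" and eQ: "e \<notin> DQ" and eU: "e \<inter> UQ \<noteq> {}" by auto
      have "e \<notin> D1"
      proof
        assume "e \<in> D1"
        then have "e \<subseteq> A" using Dsub[OF C1] unfolding A_def by blast
        then show False using eU S2(1) by blast
      qed
      moreover have "e \<noteq> {p,q}" using eU av xnb qnb by blast
      moreover have "e \<noteq> {r,zo}" using eU S2(1) pU unfolding A_def by blast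
      ultimately have "e \<in> D2 \<or> e = {w,zz}" using eE Esp by blast
      then show "e \<in> (S - DQ) \<union> {e\<in>D2. q \<in> e}" using eQ unfolding S_def by blast
    qed
    have "outd UQ DQ \<le> card (S - DQ) + card {e\<in>D2. q \<in> e}"
      unfolding outd_def using card_le_add[OF T] fS isc_finD[OF C2] by simp
    also have "\<dots> \<le> 1" using cSD cS dq k3 unfolding deg_def by linarith
    finally have "outd UQ DQ \<le> 1" .
    moreover have "2 \<le> outd UQ DQ" using mn Q by blast
    ultimately show False by simp
  qed
qed


lemma leaf_A2_half:
  assumes ab: allbad and C1: "isc U1 D1" and C2: "isc U2 D2" and dj: "U1 \<inter> U2 = {}"
    and Y: "E - D1 - D2 = {{p,q},{r,zo},{w,zo}}"
    and pU: "p \<in> U1" "r \<in> U1" and qU: "q \<in> U2" "w \<in> U2"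
    and zo: "zo \<notin> U1" "zo \<notin> U2"
  shows "deg D2 q \<le> 1 \<and> w \<noteq> q \<and> n - 2 \<le> deg D2 w"
proof -
  have Esp: "E = D1 \<union> D2 \<union> {{p,q},{r,zo},{w,zo}}" using pairY(2)[OF C1 C2 dj] Y by simp
  have xV: "p \<in> V" using pU isc_UV[OF C1] by blast
  obtain UQ DQ where Q: "isc UQ DQ" and av: "UQ \<inter> nb p = {}" using avoid[OF ab xV] by blast
  have qnb: "q \<in> nb p" using Esp nb_edge by blast
  have xnb: "p \<in> nb p" by (rule nb_self)
  obtain c1 where c1: "c1 \<in> U1" "\<forall>v\<in>U1. v \<noteq> c1 \<longrightarrow> {c1,v} \<in> D1" using isc_center C1 by blast
  have c1nb: "c1 \<in> nb p" using center_nb(1)[OF C1 c1 pU(1)] .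
  define X where "X = {{r,zo}}"
  have crossX: "\<forall>e\<in>E. e \<inter> nb p = {} \<longrightarrow> e \<inter> U1 \<noteq> {} \<longrightarrow> e - U1 \<noteq> {} \<longrightarrow> e \<in> X"
  proof (intro ballI impI)
    fix e assume e: "e \<in> E" "e \<inter> nb p = {}" "e \<inter> U1 \<noteq> {}" "e - U1 \<noteq> {}"
    have "e \<notin> D1" using e(4) Dsub[OF C1] by blast
    moreover have "e \<notin> D2" using e(3) Dsub[OF C2] dj by blast
    moreover have "e \<noteq> {p,q}" using e(2) xnb by auto
    moreover have "e \<noteq> {w,zo}" using e(3) qU zo dj by auto
    ultimately show "e \<in> X" using e(1) Esp unfolding X_def by blast
  qed
  have mat: "\<forall>e\<in>X. \<forall>e'\<in>X. e \<noteq> e' \<longrightarrow> e \<inter> e' = {}" unfolding X_def by simp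
  have cQ: "card DQ = k" using isc_cardD[OF Q] .
  have fD1: "finite {e\<in>D1. e \<inter> {p,c1} = {}}" using isc_finD[OF C1] by simp
  have fD2: "finite {e\<in>D2. e \<inter> {q} = {}}" using isc_finD[OF C2] by simp
  have b1: "card {e\<in>D1. e \<inter> {p,c1} = {}} \<le> k - (n - 1)"
    using cnt_cen[OF C1 c1, of "{p,c1}"] pU c1(1) by simp
  have b2: "card {e\<in>D2. e \<inter> {q} = {}} = k - deg D2 q" using deg_split[OF C2] .
  have dq1: "1 \<le> deg D2 q" using deg_pos[OF C2 qU(1)] .
  have SS1: "{e\<in>E. e \<subseteq> U1 - nb p} \<subseteq> {e\<in>D1. e \<inter> {p,c1} = {}} \<union> {e\<in>E - D1 - D2. e \<subseteq> U1 - nb p}"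
  proof -
    have h1: "(U1 - nb p) \<inter> U2 = {}" using dj by blast
    have h2: "(U1 - nb p) \<inter> {p,c1} = {}" using xnb c1nb by blast
    show ?thesis using side_edges[OF C1 C2 pairY(2)[OF C1 C2 dj] h1 h2] .
  qed
  have Y1: "{e\<in>E - D1 - D2. e \<subseteq> U1 - nb p} = {}" using Y qU zo dj by auto
  have SS2: "{e\<in>E. e \<subseteq> V - U1 - nb p} \<subseteq> {e\<in>D2. e \<inter> {q} = {}} \<union> {e\<in>E - D1 - D2. e \<subseteq> V - U1 - nb p}"
  proof -
    have E21: "E = D2 \<union> D1 \<union> (E - D1 - D2)" using pairY(2)[OF C1 C2 dj] by blast
    have h1: "(V - U1 - nb p) \<inter> U1 = {}" by blast
    have h2: "(V - U1 - nb p) \<inter> {q} = {}" using qnb by blast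
    show ?thesis using side_edges[OF C2 C1 E21 h1 h2] .
  qed
  have Y2: "{e\<in>E - D1 - D2. e \<subseteq> V - U1 - nb p} \<subseteq> {{w,zo}}" using Y pU by auto
  have n3': "3 \<le> n" by (rule n3)
  have zoE: "\<And>u. {zo,u} \<in> E \<Longrightarrow> u = r \<or> u = w"
  proof -
    fix u assume h: "{zo,u} \<in> E"
    have "{zo,u} \<notin> D1" using Dsub[OF C1] zo by blast
    moreover have "{zo,u} \<notin> D2" using Dsub[OF C2] zo by blast
    ultimately have "{zo,u} = {p,q} \<or> {zo,u} = {r,zo} \<or> {zo,u} = {w,zo}" using h Esp by blast
    then show "u = r \<or> u = w" using zo pU qU by (auto simp: doubleton_eq_iff)
  qed
  show ?thesis
  proof (cases rule: split4E[OF Q av crossX mat, case_names S1 S2 X1 X2])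
    case S1
    have "DQ \<subseteq> {e\<in>D1. e \<inter> {p,c1} = {}}" using order_trans[OF S1(2) SS1] unfolding Y1 by simp
    then have "card DQ \<le> card {e\<in>D1. e \<inter> {p,c1} = {}}" using fD1 by (simp add: card_mono)
    then show ?thesis using cQ b1 n3' k3 by simp
  next
    case (X1 a b)
    have "DQ \<subseteq> insert {a,b} {e\<in>D1. e \<inter> {p,c1} = {}}"
      using order_trans[OF X1(7) insert_mono[OF SS1]] unfolding Y1 by simp
    then have "card DQ \<le> card {e\<in>D1. e \<inter> {p,c1} = {}} + 1" using card_ins_le[OF _ fD1] by blast
    then show ?thesis using cQ b1 n3' k3 by simp
  next
    case (X2 a b)
    have ab: "a = zo" "b = r" using X2(1,3,4) pU zo unfolding X_def by (auto simp: doubleton_eq_iff)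
    have DQE: "DQ \<subseteq> E" using isc_DE[OF Q] .
    have UQs: "UQ \<subseteq> {zo, r, w}"
    proof
      fix u assume u: "u \<in> UQ"
      show "u \<in> {zo, r, w}"
      proof (cases "u = zo")
        case False
        then have "{zo,u} \<in> DQ" using X2(5) u ab by blast
        then have "{zo,u} \<in> E" using DQE by blast
        then show ?thesis using zoE by blast
      qed simp
    qed
    have c3: "card {zo, r, w} \<le> 3" by (auto simp: card_insert_if)
    have "card UQ \<le> card {zo, r, w}" using card_mono[of "{zo,r,w}" UQ] UQs by simp
    then have "n \<le> 3" using c3 isc_card[OF Q] by simp
    then have nn: "n = 3" using n3' by simp
    have rQ: "r \<in> UQ" using Dsub[OF Q X2(2)] ab by blast
    have wQ: "w \<in> UQ"
    proof (rule ccontr)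
      assume "w \<notin> UQ"
      then have "UQ \<subseteq> {zo, r}" using UQs by blast
      then have "card UQ \<le> 2" using card_mono[of "{zo,r}" UQ] by (simp add: card_insert_le_m1 le_trans) 
      then show False using isc_card[OF Q] nn by simp
    qed
    have rw: "r \<noteq> w" using pU qU dj by blast
    have "{r,w} \<in> DQ" using tri_all[OF Q nn rQ wQ rw] .
    then have "{r,w} \<in> insert {a,b} {e\<in>E. e \<subseteq> V - U1 - nb p}" using X2(7) by blast
    then show ?thesis using ab pU qU zo rw by (auto simp: doubleton_eq_iff)
  next
    case S2
    have DS: "DQ \<subseteq> {e\<in>D2. e \<inter> {q} = {}} \<union> {{w,zo}}"
      using order_trans[OF order_trans[OF S2(2) SS2] Un_mono[OF order_refl Y2]] .
    have "card DQ \<le> card {e\<in>D2. e \<inter> {q} = {}} + card {{w,zo}}"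
      using card_le_add[OF DS fD2] by simp
    then have dq: "deg D2 q \<le> 1" using cQ b2 deg_le[OF C2, of q] by simp
    have wzQ: "{w,zo} \<in> DQ"
    proof (rule ccontr)
      assume "{w,zo} \<notin> DQ"
      then have "DQ \<subseteq> {e\<in>D2. e \<inter> {q} = {}}" using DS by blast
      then have "card DQ \<le> card {e\<in>D2. e \<inter> {q} = {}}" using fD2 by (simp add: card_mono)
      then show False using cQ b2 dq1 k3 by simp
    qed
    have wQ: "w \<in> UQ" and zQ: "zo \<in> UQ" using Dsub[OF Q wzQ] by auto
    have qQ: "q \<notin> UQ" using qnb av by blast
    have wq: "w \<noteq> q" using wQ qQ by blast
    have DQ2: "\<forall>e\<in>DQ. e \<noteq> {w,zo} \<longrightarrow> e \<in> D2" using DS by blast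
    have zoD2: "\<And>e. e \<in> D2 \<Longrightarrow> zo \<notin> e" using Dsub[OF C2] zo by blast
    obtain cq where cq: "cq \<in> UQ" "\<forall>u\<in>UQ. u \<noteq> cq \<longrightarrow> {cq,u} \<in> DQ" using isc_center Q by blast
    have cqw: "cq = w"
    proof (rule ccontr)
      assume ncw: "cq \<noteq> w"
      show False
      proof (cases "cq = zo")
        case True
        have "UQ \<subseteq> {zo, w}"
        proof
          fix u assume u: "u \<in> UQ"
          show "u \<in> {zo, w}"
          proof (cases "u = zo")
            case False
            then have e: "{zo,u} \<in> DQ" using cq(2) u True by blast
            show ?thesis
            proof (cases "{zo,u} = {w,zo}")
              case True then show ?thesis by (auto simp: doubleton_eq_iff)
            next
              case False
              then have "{zo,u} \<in> D2" using DQ2[rule_format, OF e] by blast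
              then show ?thesis using zoD2 by blast
            qed
          qed simp
        qed
        then have "card UQ \<le> 2" using card_mono[of "{zo,w}" UQ] by (simp add: card_insert_le_m1 le_trans)
        then show False using isc_card[OF Q] n3' by simp
      next
        case False
        then have e: "{cq,zo} \<in> DQ" using cq(2) zQ by fastforce
        have "{cq,zo} \<noteq> {w,zo}" using ncw by (auto simp: doubleton_eq_iff)
        then have "{cq,zo} \<in> D2" using DQ2[rule_format, OF e] by blast
        then show False using zoD2 by blast
      qed
    qed
    have UQs: "UQ \<subseteq> insert zo U2"
    proof
      fix u assume u: "u \<in> UQ"
      show "u \<in> insert zo U2"
      proof (cases "u = w")
        case False
        then have e: "{w,u} \<in> DQ" using cq(2) u cqw by blast
        show ?thesis
        proof (cases "{w,u} = {w,zo}")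
          case True then show ?thesis by (auto simp: doubleton_eq_iff)
        next
          case False
          then have "{w,u} \<in> D2" using DQ2[rule_format, OF e] by blast
          then show ?thesis using Dsub[OF C2] by blast
        qed
      qed (use qU in simp)
    qed
    have cen: "\<forall>u\<in>UQ. u \<noteq> w \<longrightarrow> {w,u} \<in> DQ" using cq(2) cqw by blast
    have DQ1: "\<forall>e\<in>DQ. e \<noteq> {w,zo} \<longrightarrow> e \<subseteq> U2 \<longrightarrow> e \<in> D2" using DQ2 by blast
    have "n - 2 \<le> deg D2 w" using hub[OF Q C2 UQs zo(2) qU(1) qQ wQ qU(2) cen DQ1] .
    then show ?thesis using dq wq by blast
  qed
qed

lemma leaf_A2_o:
  assumes ab: allbad and C1: "isc U1 D1" and C2: "isc U2 D2" and dj: "U1 \<inter> U2 = {}"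
    and Y: "E - D1 - D2 = {{p,q},{r,zo},{w,zo}}"
    and pU: "p \<in> U1" "r \<in> U1" and qU: "q \<in> U2" "w \<in> U2"
    and zo: "zo \<notin> U1" "zo \<notin> U2" and pr: "p \<noteq> r" and qw: "q \<noteq> w"
    and dr: "2 \<le> deg D1 r" and dw: "2 \<le> deg D2 w"
  shows False
proof -
  have Esp: "E = D1 \<union> D2 \<union> {{p,q},{r,zo},{w,zo}}" using pairY(2)[OF C1 C2 dj] Y by simp
  have xV: "zo \<in> V" using Esp EsubPow by blast
  obtain UQ DQ where Q: "isc UQ DQ" and av: "UQ \<inter> nb zo = {}" using avoid[OF ab xV] by blast
  have rnb: "r \<in> nb zo" using Esp nb_edge' by blast
  have wnb: "w \<in> nb zo" using Esp nb_edge' by blast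
  have xnb: "zo \<in> nb zo" by (rule nb_self)
  define X where "X = {{p,q}}"
  have crossX: "\<forall>e\<in>E. e \<inter> nb zo = {} \<longrightarrow> e \<inter> U1 \<noteq> {} \<longrightarrow> e - U1 \<noteq> {} \<longrightarrow> e \<in> X"
  proof (intro ballI impI)
    fix e assume e: "e \<in> E" "e \<inter> nb zo = {}" "e \<inter> U1 \<noteq> {}" "e - U1 \<noteq> {}"
    have "e \<notin> D1" using e(4) Dsub[OF C1] by blast
    moreover have "e \<notin> D2" using e(3) Dsub[OF C2] dj by blast
    moreover have "e \<noteq> {r,zo}" "e \<noteq> {w,zo}" using e(2) xnb by auto
    ultimately show "e \<in> X" using e(1) Esp unfolding X_def by blast
  qed
  have mat: "\<forall>e\<in>X. \<forall>e'\<in>X. e \<noteq> e' \<longrightarrow> e \<inter> e' = {}" unfolding X_def by simp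
  have cQ: "card DQ = k" using isc_cardD[OF Q] .
  have fD1: "finite {e\<in>D1. e \<inter> {r} = {}}" using isc_finD[OF C1] by simp
  have fD2: "finite {e\<in>D2. e \<inter> {w} = {}}" using isc_finD[OF C2] by simp
  have b1: "card {e\<in>D1. e \<inter> {r} = {}} = k - deg D1 r" using deg_split[OF C1] .
  have b2: "card {e\<in>D2. e \<inter> {w} = {}} = k - deg D2 w" using deg_split[OF C2] .
  have SS1: "{e\<in>E. e \<subseteq> U1 - nb zo} \<subseteq> {e\<in>D1. e \<inter> {r} = {}} \<union> {e\<in>E - D1 - D2. e \<subseteq> U1 - nb zo}"
  proof -
    have h1: "(U1 - nb zo) \<inter> U2 = {}" using dj by blast
    have h2: "(U1 - nb zo) \<inter> {r} = {}" using rnb by blast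
    show ?thesis using side_edges[OF C1 C2 pairY(2)[OF C1 C2 dj] h1 h2] .
  qed
  have Y1: "{e\<in>E - D1 - D2. e \<subseteq> U1 - nb zo} = {}" using Y qU zo dj by auto
  have SS2: "{e\<in>E. e \<subseteq> V - U1 - nb zo} \<subseteq> {e\<in>D2. e \<inter> {w} = {}} \<union> {e\<in>E - D1 - D2. e \<subseteq> V - U1 - nb zo}"
  proof -
    have E21: "E = D2 \<union> D1 \<union> (E - D1 - D2)" using pairY(2)[OF C1 C2 dj] by blast
    have h1: "(V - U1 - nb zo) \<inter> U1 = {}" by blast
    have h2: "(V - U1 - nb zo) \<inter> {w} = {}" using wnb by blast
    show ?thesis using side_edges[OF C2 C1 E21 h1 h2] .
  qed
  have Y2: "{e\<in>E - D1 - D2. e \<subseteq> V - U1 - nb zo} = {}" using Y pU xnb by auto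
  show False
  proof (cases rule: split4E[OF Q av crossX mat, case_names S1 S2 X1 X2])
    case S1
    have "DQ \<subseteq> {e\<in>D1. e \<inter> {r} = {}}" using order_trans[OF S1(2) SS1] unfolding Y1 by simp
    then have "card DQ \<le> card {e\<in>D1. e \<inter> {r} = {}}" using fD1 by (simp add: card_mono)
    then show False using cQ b1 dr k3 by simp
  next
    case (X1 a b)
    have "DQ \<subseteq> insert {a,b} {e\<in>D1. e \<inter> {r} = {}}"
      using order_trans[OF X1(7) insert_mono[OF SS1]] unfolding Y1 by simp
    then have "card DQ \<le> card {e\<in>D1. e \<inter> {r} = {}} + 1" using card_ins_le[OF _ fD1] by blast
    then show False using cQ b1 dr k3 by simp
  next
    case S2
    have "DQ \<subseteq> {e\<in>D2. e \<inter> {w} = {}}" using order_trans[OF S2(2) SS2] unfolding Y2 by simp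
    then have "card DQ \<le> card {e\<in>D2. e \<inter> {w} = {}}" using fD2 by (simp add: card_mono)
    then show False using cQ b2 dw k3 by simp
  next
    case (X2 a b)
    have "DQ \<subseteq> insert {a,b} {e\<in>D2. e \<inter> {w} = {}}"
      using order_trans[OF X2(7) insert_mono[OF SS2]] unfolding Y2 by simp
    then have "card DQ \<le> card {e\<in>D2. e \<inter> {w} = {}} + 1" using card_ins_le[OF _ fD2] by blast
    then show False using cQ b2 dw k3 by simp
  qed
qed

lemma leaf_iso:
  assumes C1: "isc U1 D1" and C2: "isc U2 D2" and dj: "U1 \<inter> U2 = {}"
    and Y: "E - D1 - D2 = {g1,g2,g}" and g12: "g1 \<subseteq> U1 \<union> U2" "g2 \<subseteq> U1 \<union> U2"
    and g: "g \<inter> (U1 \<union> U2) = {}"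
  shows False
proof -
  have Esp: "E = D1 \<union> D2 \<union> {g1,g2,g}" using pairY(2)[OF C1 C2 dj] Y by simp
  have gE: "g \<in> E" using Esp by blast
  obtain a b where ab: "a \<noteq> b" "g = {a,b}" "a \<in> V" "b \<in> V" using Eedge[OF gE] by blast
  obtain y where y: "y \<in> U1" using isc_ne[OF C1] by blast
  have yV: "y \<in> V" using y isc_UV[OF C1] by blast
  have gV: "g \<subseteq> V" using ab by blast
  have yg: "y \<notin> g" using y g by blast
  have ag: "a \<in> g" using ab by blast
  obtain e where e: "e \<in> E" "e \<inter> g \<noteq> {}" "e - g \<noteq> {}" using cut[OF gV ag yV yg] by blast
  have "e \<notin> D1" using e(2) Dsub[OF C1] g by blast
  moreover have "e \<notin> D2" using e(2) Dsub[OF C2] g by blast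
  moreover have "e \<noteq> g1" "e \<noteq> g2" using e(2) g12 g by blast+
  moreover have "e \<noteq> g" using e(3) by blast
  ultimately show False using e(1) Esp by blast
qed

end

context ctx
begin

lemma dir_edge:
  assumes "e \<in> E" "e \<inter> U1 \<noteq> {}" "e \<inter> U2 \<noteq> {}" "U1 \<inter> U2 = {}"
  shows "\<exists>p q. e = {p,q} \<and> p \<in> U1 \<and> q \<in> U2"
proof -
  obtain a b where ab: "a \<noteq> b" "e = {a,b}" using Eedge[OF assms(1)] by blast
  show ?thesis
  proof (cases "a \<in> U1")
    case True
    then have "b \<in> U2" using assms ab by blast
    then show ?thesis using True ab by blast
  next
    case False
    then have "b \<in> U1" "a \<in> U2" using assms ab by blast+
    then show ?thesis using ab by (metis insert_commute)
  qed
qed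

lemma half_edge:
  assumes "e \<in> E" "e \<inter> U1 \<noteq> {}" "e \<inter> U2 = {}"
  shows "e \<subseteq> U1 \<or> (\<exists>r z. e = {r,z} \<and> r \<in> U1 \<and> z \<notin> U1 \<and> z \<notin> U2)"
proof -
  obtain a b where ab: "a \<noteq> b" "e = {a,b}" using Eedge[OF assms(1)] by blast
  show ?thesis
  proof (cases "a \<in> U1")
    case True
    show ?thesis
    proof (cases "b \<in> U1")
      case True then show ?thesis using \<open>a \<in> U1\<close> ab by blast
    next
      case False then show ?thesis using True ab assms(3) by blast
    qed
  next
    case False
    then have "b \<in> U1" "a \<notin> U2" using assms ab by blast+
    then show ?thesis using ab False by (metis insert_commute)
  qed
qed

lemma YsetC: "E - D1 - D2 = E - D2 - D1" by blast

lemma leaf_J3: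
  assumes ab: allbad and C1: "isc U1 D1" and C2: "isc U2 D2" and dj: "U1 \<inter> U2 = {}"
    and Y: "E - D1 - D2 = {{p1,q1},{p2,q2},{p3,q3}}" and c3: "card (E - D1 - D2) = 3"
    and pU: "p1 \<in> U1" "p2 \<in> U1" "p3 \<in> U1" and qU: "q1 \<in> U2" "q2 \<in> U2" "q3 \<in> U2"
  shows False
proof -
  have dj': "U2 \<inter> U1 = {}" using dj by blast
  have dist: "{p1,q1} \<noteq> {p2,q2}" "{p1,q1} \<noteq> {p3,q3}" "{p2,q2} \<noteq> {p3,q3}"
    using c3 unfolding Y by (auto simp: card_insert_if split: if_splits)
  have Y': "E - D2 - D1 = {{p1,q1},{p2,q2},{p3,q3}}" using Y YsetC by metis
  have pq: "\<And>a b c d. a \<in> U1 \<Longrightarrow> c \<in> U1 \<Longrightarrow> b \<in> U2 \<Longrightarrow> d \<in> U2 \<Longrightarrow> {a,b} \<noteq> {c,d} \<Longrightarrow> a = c \<Longrightarrow> b \<noteq> d"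
    by auto
  show False
  proof (cases "p1 = p2 \<or> p1 = p3 \<or> p2 = p3")
    case True
    then show False
    proof (elim disjE)
      assume e: "p1 = p2"
      have ne: "q1 \<noteq> q2" using pq[OF pU(1,2) qU(1,2) dist(1) e] .
      have YY: "E - D2 - D1 = {{p1,q1},{p1,q2},{p3,q3}}" using Y' e by simp
      have gg: "{p3,q3} \<inter> U2 \<noteq> {}" using qU(3) by blast
      show False by (rule leaf_J3D[OF ab C2 C1 dj' YY pU(1) qU(1) qU(2) ne gg])
    next
      assume e: "p1 = p3"
      have ne: "q1 \<noteq> q3" using pq[OF pU(1,3) qU(1,3) dist(2) e] .
      have YY: "E - D2 - D1 = {{p1,q1},{p1,q3},{p2,q2}}" using Y' e by auto
      have gg: "{p2,q2} \<inter> U2 \<noteq> {}" using qU(2) by blast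
      show False by (rule leaf_J3D[OF ab C2 C1 dj' YY pU(1) qU(1) qU(3) ne gg])
    next
      assume e: "p2 = p3"
      have ne: "q2 \<noteq> q3" using pq[OF pU(2,3) qU(2,3) dist(3) e] .
      have YY: "E - D2 - D1 = {{p2,q2},{p2,q3},{p1,q1}}" using Y' e by auto
      have gg: "{p1,q1} \<inter> U2 \<noteq> {}" using qU(1) by blast
      show False by (rule leaf_J3D[OF ab C2 C1 dj' YY pU(2) qU(2) qU(3) ne gg])
    qed
  next
    case np: False
    show False
    proof (cases "q1 = q2 \<or> q1 = q3 \<or> q2 = q3")
      case True
      then show False
      proof (elim disjE)
        assume e: "q1 = q2"
        have ne: "p1 \<noteq> p2" using np by blast
        have YY: "E - D1 - D2 = {{q1,p1},{q1,p2},{p3,q3}}" using Y e by (auto simp: insert_commute)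
        have gg: "{p3,q3} \<inter> U1 \<noteq> {}" using pU(3) by blast
        show False by (rule leaf_J3D[OF ab C1 C2 dj YY qU(1) pU(1) pU(2) ne gg])
      next
        assume e: "q1 = q3"
        have ne: "p1 \<noteq> p3" using np by blast
        have YY: "E - D1 - D2 = {{q1,p1},{q1,p3},{p2,q2}}" using Y e by (auto simp: insert_commute)
        have gg: "{p2,q2} \<inter> U1 \<noteq> {}" using pU(2) by blast
        show False by (rule leaf_J3D[OF ab C1 C2 dj YY qU(1) pU(1) pU(3) ne gg])
      next
        assume e: "q2 = q3"
        have ne: "p2 \<noteq> p3" using np by blast
        have YY: "E - D1 - D2 = {{q2,p2},{q2,p3},{p1,q1}}" using Y e by (auto simp: insert_commute)
        have gg: "{p1,q1} \<inter> U1 \<noteq> {}" using pU(1) by blast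
        show False by (rule leaf_J3D[OF ab C1 C2 dj YY qU(2) pU(2) pU(3) ne gg])
      qed
    next
      case nq: False
      have h1: "deg D1 p1 \<le> 1 \<and> (n - 2 \<le> deg D1 p2 \<or> n - 2 \<le> deg D1 p3)"
        using leaf_J3M_half[OF ab C1 C2 dj Y pU qU] np nq by simp
      have Y2: "E - D1 - D2 = {{p2,q2},{p1,q1},{p3,q3}}" using Y by auto
      have h2: "deg D1 p2 \<le> 1 \<and> (n - 2 \<le> deg D1 p1 \<or> n - 2 \<le> deg D1 p3)"
        using leaf_J3M_half[OF ab C1 C2 dj Y2 pU(2,1,3) qU(2,1,3)] np nq by simp
      have Y3: "E - D1 - D2 = {{p3,q3},{p1,q1},{p2,q2}}" using Y by auto
      have h3: "deg D1 p3 \<le> 1 \<and> (n - 2 \<le> deg D1 p1 \<or> n - 2 \<le> deg D1 p2)"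
        using leaf_J3M_half[OF ab C1 C2 dj Y3 pU(3,1,2) qU(3,1,2)] np nq by simp
      have "n - 2 \<le> 1" using h1 h2 h3 by linarith
      then have "n = 3" using n3 by simp
      then have "2 \<le> deg D1 p1" using tri[OF C1 _ pU(1)] by simp
      then show False using h1 by simp
    qed
  qed
qed


lemma B_case:
  assumes ab: allbad and C1: "isc U1 D1" and C2: "isc U2 D2" and dj: "U1 \<inter> U2 = {}"
    and Y: "E - D1 - D2 = {{p,q},{p',q'},f}" and ne: "{p,q} \<noteq> {p',q'}"
    and pU: "p \<in> U1" "p' \<in> U1" and qU: "q \<in> U2" "q' \<in> U2"
    and f1: "f \<inter> U1 = {}" and f2: "f \<inter> U2 \<noteq> {}"
  shows "special (2 * k + 3) VF EF V E"
proof (cases "q = q'")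
  case True
  have qV: "q \<in> V" using qU isc_UV[OF C2] by blast
  have qU1: "q \<notin> U1" using qU dj by blast
  have hex: "\<forall>e\<in>E. e \<inter> U1 \<noteq> {} \<longrightarrow> \<not> e \<subseteq> U1 \<longrightarrow> q \<in> e"
  proof (intro ballI impI)
    fix e assume e: "e \<in> E" "e \<inter> U1 \<noteq> {}" "\<not> e \<subseteq> U1"
    have "e \<notin> D1" using e(3) Dsub[OF C1] by blast
    moreover have "e \<notin> D2" using e(2) Dsub[OF C2] dj by blast
    moreover have "e \<noteq> f" using e(2) f1 by blast
    ultimately have "e = {p,q} \<or> e = {p',q'}" using e(1) Y by blast
    then show "q \<in> e" using True by blast
  qed
  show ?thesis by (rule exit_special[OF ab C1 qV qU1 hex])
next
  case nq: False
  have dj': "U2 \<inter> U1 = {}" using dj by blast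
  show ?thesis
  proof (cases "p = p'")
    case True
    have YY: "E - D2 - D1 = {{p,q},{p,q'},f}" using Y True YsetC by metis
    have False by (rule leaf_J3D[OF ab C2 C1 dj' YY pU(1) qU(1) qU(2) nq f2])
    then show ?thesis ..
  next
    case np: False
    have h1: "deg D1 p \<le> 1 \<and> n - 2 \<le> deg D1 p'" by (rule leaf_B2_half[OF ab C1 C2 dj Y pU qU nq f1])
    have Y2: "E - D1 - D2 = {{p',q'},{p,q},f}" using Y by auto
    have nq': "q' \<noteq> q" using nq by simp
    have h2: "deg D1 p' \<le> 1 \<and> n - 2 \<le> deg D1 p" by (rule leaf_B2_half[OF ab C1 C2 dj Y2 pU(2,1) qU(2,1) nq' f1])
    have "n - 2 \<le> 1" using h1 h2 by linarith
    then have "n = 3" using n3 by simp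
    then have "2 \<le> deg D1 p" using tri[OF C1 _ pU(1)] by simp
    then have False using h1 by simp
    then show ?thesis ..
  qed
qed

lemma A_case:
  assumes ab: allbad and C1: "isc U1 D1" and C2: "isc U2 D2" and dj: "U1 \<inter> U2 = {}"
    and mn: "\<forall>U D. isc U D \<longrightarrow> 2 \<le> outd U D"
    and Y: "E - D1 - D2 = {{p,q},e0,f}"
    and pU: "p \<in> U1" and qU: "q \<in> U2"
    and e1: "e0 \<inter> U1 \<noteq> {}" "e0 \<inter> U2 = {}" and f1: "f \<inter> U1 = {}" "f \<inter> U2 \<noteq> {}"
  shows "special (2 * k + 3) VF EF V E"
proof -
  have Esp: "E = D1 \<union> D2 \<union> {{p,q},e0,f}" using pairY(2)[OF C1 C2 dj] Y by simp
  have e0E: "e0 \<in> E" and fE: "f \<in> E" using Esp by auto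
  have dj': "U2 \<inter> U1 = {}" using dj by blast
  show ?thesis
  proof (cases "e0 \<subseteq> U1")
    case True
    have qV: "q \<in> V" using qU isc_UV[OF C2] by blast
    have qU1: "q \<notin> U1" using qU dj by blast
    have hex: "\<forall>e\<in>E. e \<inter> U1 \<noteq> {} \<longrightarrow> \<not> e \<subseteq> U1 \<longrightarrow> q \<in> e"
    proof (intro ballI impI)
      fix e assume e: "e \<in> E" "e \<inter> U1 \<noteq> {}" "\<not> e \<subseteq> U1"
      have "e \<notin> D1" using e(3) Dsub[OF C1] by blast
      moreover have "e \<notin> D2" using e(2) Dsub[OF C2] dj by blast
      moreover have "e \<noteq> f" using e(2) f1 by blast
      moreover have "e \<noteq> e0" using e(3) True by blast
      ultimately have "e = {p,q}" using e(1) Y by blast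
      then show "q \<in> e" by blast
    qed
    show ?thesis by (rule exit_special[OF ab C1 qV qU1 hex])
  next
    case nE: False
    show ?thesis
    proof (cases "f \<subseteq> U2")
      case True
      have pV: "p \<in> V" using pU isc_UV[OF C1] by blast
      have pU2: "p \<notin> U2" using pU dj by blast
      have hex: "\<forall>e\<in>E. e \<inter> U2 \<noteq> {} \<longrightarrow> \<not> e \<subseteq> U2 \<longrightarrow> p \<in> e"
      proof (intro ballI impI)
        fix e assume e: "e \<in> E" "e \<inter> U2 \<noteq> {}" "\<not> e \<subseteq> U2"
        have "e \<notin> D2" using e(3) Dsub[OF C2] by blast
        moreover have "e \<notin> D1" using e(2) Dsub[OF C1] dj by blast
        moreover have "e \<noteq> e0" using e(2) e1(2) by blast
        moreover have "e \<noteq> f" using e(3) True by blast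
        ultimately have "e = {p,q}" using e(1) Y by blast
        then show "p \<in> e" by blast
      qed
      show ?thesis by (rule exit_special[OF ab C2 pV pU2 hex])
    next
      case nF: False
      obtain r zo where ro: "e0 = {r,zo}" "r \<in> U1" "zo \<notin> U1" "zo \<notin> U2"
        using half_edge[OF e0E e1] nE by blast
      obtain w zz where wz: "f = {w,zz}" "w \<in> U2" "zz \<notin> U2" "zz \<notin> U1"
        using half_edge[OF fE f1(2) f1(1)] nF by blast
      show ?thesis
      proof (cases "zo = zz")
        case False
        have YY: "E - D1 - D2 = {{p,q},{r,zo},{w,zz}}" using Y ro(1) wz(1) by simp
        have False by (rule leaf_A1[OF ab C1 C2 dj mn YY pU ro(2) qU wz(2) ro(3) ro(4) wz(4) wz(3) False])
        then show ?thesis ..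
      next
        case True
        have YY: "E - D1 - D2 = {{p,q},{r,zo},{w,zo}}" using Y ro(1) wz(1) True by simp
        have h1: "deg D2 q \<le> 1 \<and> w \<noteq> q \<and> n - 2 \<le> deg D2 w"
          by (rule leaf_A2_half[OF ab C1 C2 dj YY pU ro(2) qU wz(2) ro(3) ro(4)])
        have YY2: "E - D2 - D1 = {{q,p},{w,zo},{r,zo}}" using YY YsetC by (metis insert_commute)
        have h2: "deg D1 p \<le> 1 \<and> r \<noteq> p \<and> n - 2 \<le> deg D1 r"
          by (rule leaf_A2_half[OF ab C2 C1 dj' YY2 qU wz(2) pU ro(2) ro(4) ro(3)])
        have "n \<noteq> 3"
        proof
          assume "n = 3"
          then have "2 \<le> deg D2 q" using tri[OF C2 _ qU] by simp
          then show False using h1 by simp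
        qed
        then have n4: "4 \<le> n" using n3 by simp
        have dr: "2 \<le> deg D1 r" using h2 n4 by linarith
        have dw: "2 \<le> deg D2 w" using h1 n4 by linarith
        have pr: "p \<noteq> r" using h2 by auto
        have qw: "q \<noteq> w" using h1 by auto
        have False by (rule leaf_A2_o[OF ab C1 C2 dj YY pU ro(2) qU wz(2) ro(3) ro(4) pr qw dr dw])
        then show ?thesis ..
      qed
    qed
  qed
qed


lemma main_special:
  assumes ab: allbad
  shows "special (2 * k + 3) VF EF V E"
proof -
  obtain x0 where x0: "x0 \<in> V" using conn unfolding connected_graph_def by blast
  have ex: "\<exists>j U D. isc U D \<and> outd U D = j" using avoid[OF ab x0] by blast
  define j where "j = (LEAST j. \<exists>U D. isc U D \<and> outd U D = j)"
  have "\<exists>U D. isc U D \<and> outd U D = j" unfolding j_def by (rule LeastI_ex[OF ex])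
  then obtain UR DR where R: "isc UR DR" and jR: "outd UR DR = j" by blast
  have mn: "\<forall>U D. isc U D \<longrightarrow> j \<le> outd U D"
  proof (intro allI impI)
    fix U D assume "isc U D"
    then have "\<exists>U' D'. isc U' D' \<and> outd U' D' = outd U D" by blast
    then show "j \<le> outd U D" unfolding j_def by (rule Least_le)
  qed
  obtain cR where cR: "cR \<in> UR" "\<forall>u\<in>UR. u \<noteq> cR \<longrightarrow> {cR,u} \<in> DR" using isc_center R by blast
  have cRV: "cR \<in> V" using cR isc_UV[OF R] by blast
  obtain UW DW where W: "isc UW DW" and Wav: "UW \<inter> nb cR = {}" using avoid[OF ab cRV] by blast
  have dj: "UR \<inter> UW = {}" using center_U_nb[OF R cR] Wav by blast
  have dj': "UW \<inter> UR = {}" using dj by blast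
  define Y where "Y = E - DR - DW"
  have Esp: "E = DR \<union> DW \<union> Y" unfolding Y_def using pairY(2)[OF R W dj] .
  have cY: "card Y = 3" unfolding Y_def using pairY(3)[OF R W dj] .
  have fY: "finite Y" unfolding Y_def using pairY(4)[OF R W dj] .
  define YR where "YR = {e\<in>Y. e \<inter> UR \<noteq> {}}"
  define YW where "YW = {e\<in>Y. e \<inter> UW \<noteq> {}}"
  have oR: "outd UR DR = card YR"
  proof -
    have "{e\<in>E. e \<notin> DR \<and> e \<inter> UR \<noteq> {}} = YR"
      unfolding YR_def Y_def using Dsub[OF W] dj by blast
    then show ?thesis unfolding outd_def by simp
  qed
  have oW: "outd UW DW = card YW"
  proof -
    have "{e\<in>E. e \<notin> DW \<and> e \<inter> UW \<noteq> {}} = YW"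
      unfolding YW_def Y_def using Dsub[OF R] dj by blast
    then show ?thesis unfolding outd_def by simp
  qed
  have YRsub: "YR \<subseteq> Y" and YWsub: "YW \<subseteq> Y" unfolding YR_def YW_def by auto
  have fYR: "finite YR" and fYW: "finite YW" using finite_subset[OF YRsub fY] finite_subset[OF YWsub fY] .
  have cYR: "card YR = j" using oR jR by simp
  have cYW: "j \<le> card YW" using mn W oW by metis
  have j3: "j \<le> 3" using card_mono[OF fY YRsub] cY cYR by simp
  have UWV: "UW \<subseteq> V" using isc_UV[OF W] .
  obtain yW where yW: "yW \<in> UW" using isc_ne[OF W] by blast
  have yWR: "yW \<notin> UR" using yW dj by blast
  have yWV: "yW \<in> V" using yW UWV by blast
  have URV: "UR \<subseteq> V" using isc_UV[OF R] .
  obtain e0 where e0: "e0 \<in> E" "e0 \<inter> UR \<noteq> {}" "e0 - UR \<noteq> {}"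
    using cut[OF URV cR(1) yWV yWR] by blast
  have e0YR: "e0 \<in> YR"
  proof -
    have "e0 \<notin> DR" using e0(3) Dsub[OF R] by blast
    moreover have "e0 \<notin> DW" using e0(2) Dsub[OF W] dj by blast
    ultimately show ?thesis unfolding YR_def using e0 Esp by blast
  qed
  have inYR: "\<And>e. e \<in> E \<Longrightarrow> e \<inter> UR \<noteq> {} \<Longrightarrow> \<not> e \<subseteq> UR \<Longrightarrow> e \<in> YR"
  proof -
    fix e assume e: "e \<in> E" "e \<inter> UR \<noteq> {}" "\<not> e \<subseteq> UR"
    have "e \<notin> DR" using e(3) Dsub[OF R] by blast
    moreover have "e \<notin> DW" using e(2) Dsub[OF W] dj by blast
    ultimately show "e \<in> YR" unfolding YR_def using e Esp by blast
  qed
  have YR_dir: "\<And>e. e \<in> YR \<Longrightarrow> e \<in> YW \<Longrightarrow> \<exists>p q. e = {p,q} \<and> p \<in> UR \<and> q \<in> UW"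
  proof -
    fix e assume "e \<in> YR" "e \<in> YW"
    then show "\<exists>p q. e = {p,q} \<and> p \<in> UR \<and> q \<in> UW"
      using dir_edge[of e UR UW] dj Esp unfolding YR_def YW_def by blast
  qed
  have j_cases: "j = 1 \<or> j = 2 \<or> j = 3"
  proof -
    have "card YR \<noteq> 0" using e0YR fYR card_0_eq by blast
    then have "j \<noteq> 0" using cYR by simp
    then show ?thesis using j3 by linarith
  qed
  show ?thesis
  proof -
    { assume j1: "j = 1"
      then obtain e1 where YR1: "YR = {e1}" using cYR by (metis card_1_singletonE)
      have ee: "e0 = e1" using e0YR YR1 by blast
      obtain a b where abe: "a \<noteq> b" "e0 = {a,b}" using Eedge[OF e0(1)] by blast
      obtain r v where rv: "e0 = {r,v}" "r \<in> UR" "v \<notin> UR"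
      proof (cases "a \<in> UR")
        case True
        then have "b \<notin> UR" using e0(3) abe by blast
        then show ?thesis using that True abe by blast
      next
        case False
        then have "b \<in> UR" using e0(2) abe by blast
        then show ?thesis using that False abe by (metis insert_commute)
      qed
      have vV: "v \<in> V" using rv e0(1) EsubPow by blast
      have hex: "\<forall>e\<in>E. e \<inter> UR \<noteq> {} \<longrightarrow> \<not> e \<subseteq> UR \<longrightarrow> v \<in> e"
      proof (intro ballI impI)
        fix e assume e: "e \<in> E" "e \<inter> UR \<noteq> {}" "\<not> e \<subseteq> UR"
        have "e \<in> YR" using inYR[OF e] .
        then have "e = e0" using YR1 ee by blast
        then show "v \<in> e" using rv by blast
      qed
      have ?thesis by (rule exit_special[OF ab R vV rv(3) hex]) }
    moreover
    { assume j3: "j = 3"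
      have YReq: "YR = Y" using card_subset_eq[OF fY YRsub] cYR cY j3 by simp
      have YWeq: "YW = Y" using card_subset_eq[OF fY YWsub] cYW cY j3 card_mono[OF fY YWsub] by simp
      obtain g1 g2 g3 where g: "Y = {g1,g2,g3}" using cY by (metis card_3_iff)
      have gR: "g1 \<in> YR" "g2 \<in> YR" "g3 \<in> YR" and gW: "g1 \<in> YW" "g2 \<in> YW" "g3 \<in> YW"
        using g YReq YWeq by auto
      obtain p1 q1 where 1: "g1 = {p1,q1}" "p1 \<in> UR" "q1 \<in> UW" using YR_dir[OF gR(1) gW(1)] by blast
      obtain p2 q2 where 2: "g2 = {p2,q2}" "p2 \<in> UR" "q2 \<in> UW" using YR_dir[OF gR(2) gW(2)] by blast
      obtain p3 q3 where 3: "g3 = {p3,q3}" "p3 \<in> UR" "q3 \<in> UW" using YR_dir[OF gR(3) gW(3)] by blast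
      have YY: "E - DR - DW = {{p1,q1},{p2,q2},{p3,q3}}" using g 1 2 3 unfolding Y_def by simp
      have c3: "card (E - DR - DW) = 3" using cY unfolding Y_def .
      have False by (rule leaf_J3[OF ab R W dj YY c3 1(2) 2(2) 3(2) 1(3) 2(3) 3(3)])
      then have ?thesis .. }
    moreover
    { assume j2: "j = 2"
      obtain g1 g2 where g12: "YR = {g1,g2}" "g1 \<noteq> g2" using cYR j2 by (metis card_2_iff)
      have gY: "g1 \<in> Y" "g2 \<in> Y" using g12 YRsub by auto
      have cW3: "card YW \<le> 3" using card_mono[OF fY YWsub] cY by simp
      have ?thesis
      proof (cases "card YW = 3")
        case True
        have YWeq: "YW = Y" using card_subset_eq[OF fY YWsub] True cY by simp
        have "card (Y - YR) = 1" using card_Diff_subset[OF fYR YRsub] cY cYR j2 by simp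
        then obtain f where f: "Y - YR = {f}" by (metis card_1_singletonE)
        have Yeq: "Y = {g1,g2,f}" using f g12 YRsub by blast
        have gR: "g1 \<in> YR" "g2 \<in> YR" using g12 by auto
        have gW: "g1 \<in> YW" "g2 \<in> YW" using gY YWeq by auto
        obtain p q where 1: "g1 = {p,q}" "p \<in> UR" "q \<in> UW" using YR_dir[OF gR(1) gW(1)] by blast
        obtain p' q' where 2: "g2 = {p',q'}" "p' \<in> UR" "q' \<in> UW" using YR_dir[OF gR(2) gW(2)] by blast
        have fR: "f \<inter> UR = {}" using f unfolding YR_def by blast
        have fW: "f \<inter> UW \<noteq> {}" using f YWeq unfolding YW_def by blast
        have YY: "E - DR - DW = {{p,q},{p',q'},f}" using Yeq 1 2 unfolding Y_def by simp
        have ne: "{p,q} \<noteq> {p',q'}" using g12(2) 1 2 by simp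
        show ?thesis by (rule B_case[OF ab R W dj YY ne 1(2) 2(2) 1(3) 2(3) fR fW])
      next
        case False
        then have cW2: "card YW = 2" using cYW j2 cW3 by simp
        have mn2: "\<forall>U D. isc U D \<longrightarrow> 2 \<le> outd U D" using mn j2 by simp
        show ?thesis
        proof (cases "YR = YW")
          case True
          have "card (Y - YR) = 1" using card_Diff_subset[OF fYR YRsub] cY cYR j2 by simp
          then obtain g where f: "Y - YR = {g}" by (metis card_1_singletonE)
          have Yeq: "Y = {g1,g2,g}" using f g12 YRsub by blast
          have gR: "g1 \<in> YR" "g2 \<in> YR" using g12 by auto
          have gW: "g1 \<in> YW" "g2 \<in> YW" using gR True by auto
          have s1: "g1 \<subseteq> UR \<union> UW" using YR_dir[OF gR(1) gW(1)] by blast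
          have s2: "g2 \<subseteq> UR \<union> UW" using YR_dir[OF gR(2) gW(2)] by blast
          have gY: "g \<in> Y" "g \<notin> YR" using f by auto
          have gYW: "g \<notin> YW" using gY(2) True by simp
          have g1': "g \<inter> UR = {}" using gY unfolding YR_def by blast
          have g2': "g \<inter> UW = {}" using gY(1) gYW unfolding YW_def by blast
          have gn: "g \<inter> (UR \<union> UW) = {}" using g1' g2' by blast
          have YY: "E - DR - DW = {g1,g2,g}" using Yeq unfolding Y_def .
          have False by (rule leaf_iso[OF R W dj YY s1 s2 gn])
          then show ?thesis ..
        next
          case False
          have cU: "card (YR \<union> YW) \<le> 3" using card_mono[OF fY] YRsub YWsub cY by (metis Un_least)
          have "card (YR \<union> YW) + card (YR \<inter> YW) = card YR + card YW"
            using card_Un_Int[OF fYR fYW] by simp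
          then have cI: "1 \<le> card (YR \<inter> YW)" using cU cYR cW2 j2 by simp
          have cI2: "card (YR \<inter> YW) \<le> 1"
          proof (rule ccontr)
            assume "\<not> card (YR \<inter> YW) \<le> 1"
            then have "2 \<le> card (YR \<inter> YW)" by simp
            then have "YR \<inter> YW = YR" using card_subset_eq[OF fYR, of "YR \<inter> YW"] cYR j2
              by (metis Int_lower1 card_mono fYR le_antisym)
            moreover have "YR \<inter> YW = YW" using card_subset_eq[OF fYW, of "YR \<inter> YW"] cW2 \<open>2 \<le> card (YR \<inter> YW)\<close>
              by (metis Int_lower2 card_mono fYW le_antisym)
            ultimately show False using False by simp
          qed
          obtain h where h: "YR \<inter> YW = {h}" using cI cI2 by (metis card_1_singletonE le_antisym)
          have hR0: "h \<in> YR" "h \<in> YW" using h by auto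
          have "card (YR - {h}) = 1" using cYR j2 hR0(1) fYR by simp
          then obtain e where eR: "YR - {h} = {e}" by (metis card_1_singletonE)
          have "card (YW - {h}) = 1" using cW2 hR0(2) fYW by simp
          then obtain f where fW: "YW - {h} = {f}" by (metis card_1_singletonE)
          have hR: "h \<in> YR" "h \<in> YW" using h by auto
          have eY: "e \<in> YR" "e \<notin> YW" using eR h by auto
          have fY': "f \<in> YW" "f \<notin> YR" using fW h by auto
          have YRe: "YR = {h, e}" using eR hR by blast
          have YWe: "YW = {h, f}" using fW hR by blast
          have Yeq: "Y = {h, e, f}"
          proof -
            have "{h,e,f} \<subseteq> Y" using YRsub YWsub YRe YWe by blast
            moreover have "card {h,e,f} = 3"
              using eY fY' hR by (auto simp: card_insert_if)
            ultimately show ?thesis using card_subset_eq[OF fY] cY by metis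
          qed
          obtain p q where 1: "h = {p,q}" "p \<in> UR" "q \<in> UW" using YR_dir[OF hR] by blast
          have e1: "e \<inter> UR \<noteq> {}" "e \<inter> UW = {}" using eY YRsub unfolding YR_def YW_def by auto
          have f1: "f \<inter> UR = {}" "f \<inter> UW \<noteq> {}" using fY' YWsub unfolding YR_def YW_def by auto
          have YY: "E - DR - DW = {{p,q},e,f}" using Yeq 1 unfolding Y_def by simp
          show ?thesis by (rule A_case[OF ab R W dj mn2 YY 1(2) 1(3) e1 f1])
        qed
      qed }
    ultimately show ?thesis using j_cases by blast
  qed
qed

end

theorem lemma2p1:
  fixes VF :: "'b set" and EF :: "'b set set" and V :: "'a set" and E :: "'a set set"
    and k :: nat
  assumes "k \<ge> 3"
    and "sgraph VF EF" and "card EF = k" and "gamma_one VF EF"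
    and "connected_graph V E" and "card E = 2 * k + 3"
    and "\<exists>f1 f2. embeds f1 VF EF V E \<and> embeds f2 VF EF V E \<and> f1 ` VF \<inter> f2 ` VF = {}"
  shows "iota V E VF EF = 1 \<or> special (2 * k + 3) VF EF V E"
proof -
  interpret ctx VF EF V E
  proof
    show "sgraph VF EF" by (rule assms(2))
    show "3 \<le> card EF" using assms(1,3) by simp
    show "gamma_one VF EF" by (rule assms(4))
    show "connected_graph V E" by (rule assms(5))
    show "card E = 2 * card EF + 3" using assms(3,6) by simp
  qed
  obtain f1 where f1: "embeds f1 VF EF V E" using assms(7) by blast
  show ?thesis
  proof (cases "\<exists>x\<in>V. isolating V E VF EF {x}")
    case True
    then obtain x where x: "x \<in> V" "isolating V E VF EF {x}" by blast
    have P1: "\<exists>D. isolating V E VF EF D \<and> card D = 1" using x by (intro exI[of _ "{x}"]) simp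
    have P0: "\<And>m. (\<exists>D. isolating V E VF EF D \<and> card D = m) \<Longrightarrow> 1 \<le> m"
    proof (rule ccontr)
      fix m assume m: "\<exists>D. isolating V E VF EF D \<and> card D = m" "\<not> 1 \<le> m"
      then obtain D where D: "isolating V E VF EF D" "card D = 0" by auto
      have "D \<subseteq> V" using D(1) by (simp add: isolating_def)
      then have "finite D" using finV finite_subset by blast
      then have "D = {}" using D(2) by simp
      then have nh: "\<not> has_copy VF EF V {e\<in>E. e \<subseteq> V}"
        using D(1) by (simp add: isolating_def closed_nbhd_def)
      have "embeds f1 VF EF V {e\<in>E. e \<subseteq> V}" using f1 EsubPow unfolding embeds_def by blast
      then have "has_copy VF EF V {e\<in>E. e \<subseteq> V}" unfolding has_copy_def by blast
      then show False using nh by simp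
    qed
    have "iota V E VF EF = 1" unfolding iota_def
      by (rule Least_equality) (use P1 P0 in auto)
    then show ?thesis ..
  next
    case False
    have "allbad" unfolding allbad_def
    proof
      fix x assume x: "x \<in> V"
      then have "\<not> isolating V E VF EF {x}" using False by blast
      then have "has_copy VF EF (V - nb x) {e\<in>E. e \<subseteq> V - nb x}"
        using x by (simp add: isolating_def nb_def Let_def)
      then obtain f where f: "embeds f VF EF (V - nb x) {e\<in>E. e \<subseteq> V - nb x}"
        unfolding has_copy_def by blast
      have "embeds f VF EF V E" using f unfolding embeds_def by blast
      then have "isc (f ` VF) ((\<lambda>e. f ` e) ` EF)" unfolding isc_def by blast
      moreover have "f ` VF \<inter> nb x = {}" using f unfolding embeds_def by blast
      ultimately show "\<exists>U D. isc U D \<and> U \<inter> nb x = {}" by blast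
    qed
    then have "special (2 * card EF + 3) VF EF V E" by (rule main_special)
    then show ?thesis using assms(3) by simp
  qed
qed


end
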